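(* For a space $X$ and an infinite set $\mathcal{A}$, the following are equivalent: (i) Each convex-valued l.s.c. mapping $\Phi:X\rightrightarrows\mathbf{c}_{00}(\mathcal{A})$ has, for every $\varepsilon>0$, a continuous $\varepsilon$-selection. (ii) Each convex-valued l.s.c. mapping $\Phi:X\rightrightarrows\ell_1(\mathcal{A})$ has, for every $\varepsilon>0$, a continuous $\varepsilon$-selection. (iii) Each open cover $\{U_\alpha:\alpha\in\mathcal{A}\}$ of $X$ indexed by $\mathcal{A}$ has an index-subordinated partition of unity.
   Context: $\ell_1(\mathcal{A})$ is the Banach space of $y:\mathcal{A}\to\mathbb{R}$ with $\|y\|_1=\sum_\alpha|y(\alpha)|<\infty$; $\mathbf{c}_{00}(\mathcal{A})$ is its (normed, non-complete) subspace of finitely supported functions with the $\|\cdot\|_1$ norm. A set-valued mapping $\Phi:X\rightrightarrows Y$ assigns nonempty subsets; it is l.s.c. if $\{x:\Phi(x)\cap U\ne\emptyset\}$ is open for every open $U\subseteq Y$, and convex-valued if every $\Phi(x)$ is convex. For a metric space $(Y,d)$, a map $f:X\to Y$ is an $\varepsilon$-selection for $\Phi$ if for every $x$ there is $y\in\Phi(x)$ with $d(f(x),y)<\varepsilon$. A partition of unity indexed by $\mathcal{A}$ is a family of continuous $\xi_\alpha:X\to[0,1]$ with $\sum_\alpha\xi_\alpha(x)=1$ for all $x$; it is index-subordinated to $\{U_\alpha\}$ if $\{x:\xi_\alpha(x)\neq0\}\subseteq U_\alpha$ for all $\alpha$. *)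

theory Defs
  imports "HOL-Analysis.Analysis"
begin

text \<open>Elements of l1(A) / c00(A) are modelled as functions 'a => real, the index set A
being the (infinite) type 'a.\<close>

definition l1norm :: "('a \<Rightarrow> real) \<Rightarrow> real" where
  "l1norm y = (\<Sum>\<^sub>\<infinity>a. \<bar>y a\<bar>)"

definition l1dist :: "('a \<Rightarrow> real) \<Rightarrow> ('a \<Rightarrow> real) \<Rightarrow> real" where
  "l1dist y z = l1norm (\<lambda>a. y a - z a)"

definition ell1 :: "('a \<Rightarrow> real) set" where
  "ell1 = {y. (\<lambda>a. \<bar>y a\<bar>) summable_on UNIV}"

definition c00 :: "('a \<Rightarrow> real) set" where
  "c00 = {y. finite {a. y a \<noteq> 0}}"

definition l1top :: "('a \<Rightarrow> real) set \<Rightarrow> ('a \<Rightarrow> real) topology" where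
  "l1top Y = Metric_space.mtopology Y l1dist"

definition convex_fun_set :: "('a \<Rightarrow> real) set \<Rightarrow> bool" where
  "convex_fun_set S \<longleftrightarrow>
     (\<forall>y\<in>S. \<forall>z\<in>S. \<forall>t::real. 0 \<le> t \<and> t \<le> 1 \<longrightarrow> (\<lambda>a. t * y a + (1 - t) * z a) \<in> S)"

definition convex_lsc_mapping :: "('x::topological_space \<Rightarrow> ('a \<Rightarrow> real) set) \<Rightarrow> ('a \<Rightarrow> real) set \<Rightarrow> bool" where
  "convex_lsc_mapping \<Phi> Y \<longleftrightarrow>
     (\<forall>x. \<Phi> x \<noteq> {} \<and> \<Phi> x \<subseteq> Y \<and> convex_fun_set (\<Phi> x)) \<and>
     (\<forall>U. openin (l1top Y) U \<longrightarrow> open {x. \<Phi> x \<inter> U \<noteq> {}})"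

definition is_eps_selection :: "real \<Rightarrow> ('x \<Rightarrow> ('a \<Rightarrow> real) set) \<Rightarrow> ('x \<Rightarrow> ('a \<Rightarrow> real)) \<Rightarrow> bool" where
  "is_eps_selection \<epsilon> \<Phi> f \<longleftrightarrow> (\<forall>x. \<exists>y\<in>\<Phi> x. l1dist (f x) y < \<epsilon>)"

definition has_cont_eps_selections :: "('a \<Rightarrow> real) set \<Rightarrow> ('x::topological_space) itself \<Rightarrow> bool" where
  "has_cont_eps_selections Y _ \<longleftrightarrow>
     (\<forall>\<Phi> :: 'x \<Rightarrow> ('a \<Rightarrow> real) set. convex_lsc_mapping \<Phi> Y \<longrightarrow>
        (\<forall>\<epsilon>>0. \<exists>f. continuous_map euclidean (l1top Y) f \<and> is_eps_selection \<epsilon> \<Phi> f))"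

definition partition_of_unity :: "('a \<Rightarrow> 'x::topological_space \<Rightarrow> real) \<Rightarrow> bool" where
  "partition_of_unity \<xi> \<longleftrightarrow>
     (\<forall>a. continuous_on UNIV (\<xi> a) \<and> (\<forall>x. 0 \<le> \<xi> a x \<and> \<xi> a x \<le> 1)) \<and>
     (\<forall>x. ((\<lambda>a. \<xi> a x) has_sum 1) UNIV)"

definition index_subordinated :: "('a \<Rightarrow> 'x \<Rightarrow> real) \<Rightarrow> ('a \<Rightarrow> 'x set) \<Rightarrow> bool" where
  "index_subordinated \<xi> U \<longleftrightarrow> (\<forall>a. {x. \<xi> a x \<noteq> 0} \<subseteq> U a)"

end

theory Submission
  imports Defs
begin

lemma ell1_iff_bdd:
  "y \<in> ell1 \<longleftrightarrow> (\<exists>B. \<forall>F. finite F \<longrightarrow> (\<Sum>a\<in>F. \<bar>y a\<bar>) \<le> B)"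
proof
  assume "y \<in> ell1"
  then have s: "(\<lambda>a. \<bar>y a\<bar>) summable_on UNIV" by (simp add: ell1_def)
  show "\<exists>B. \<forall>F. finite F \<longrightarrow> (\<Sum>a\<in>F. \<bar>y a\<bar>) \<le> B"
    by (intro exI[of _ "infsum (\<lambda>a. \<bar>y a\<bar>) UNIV"] allI impI finite_sum_le_infsum[OF s]) auto
next
  assume "\<exists>B. \<forall>F. finite F \<longrightarrow> (\<Sum>a\<in>F. \<bar>y a\<bar>) \<le> B"
  then obtain B where B: "\<And>F. finite F \<Longrightarrow> (\<Sum>a\<in>F. \<bar>y a\<bar>) \<le> B" by blast
  have "(\<lambda>a. \<bar>y a\<bar>) summable_on UNIV"
    by (rule nonneg_bdd_above_summable_on) (auto intro!: bdd_aboveI[of _ B] B)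
  then show "y \<in> ell1" by (simp add: ell1_def)
qed

lemma l1norm_nonneg: "0 \<le> l1norm y"
  unfolding l1norm_def by (rule infsum_nonneg) auto

lemma sum_le_l1norm: "y \<in> ell1 \<Longrightarrow> finite F \<Longrightarrow> (\<Sum>a\<in>F. \<bar>y a\<bar>) \<le> l1norm y"
  unfolding l1norm_def ell1_def by (intro finite_sum_le_infsum) auto

lemma l1norm_le: "(\<And>F. finite F \<Longrightarrow> (\<Sum>a\<in>F. \<bar>y a\<bar>) \<le> B) \<Longrightarrow> l1norm y \<le> B"
proof -
  assume B: "\<And>F. finite F \<Longrightarrow> (\<Sum>a\<in>F. \<bar>y a\<bar>) \<le> B"
  then have "y \<in> ell1" using ell1_iff_bdd by blast
  then show ?thesis unfolding l1norm_def ell1_def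
    by (intro infsum_le_finite_sums) (auto intro: B)
qed

lemma abs_le_l1norm: "y \<in> ell1 \<Longrightarrow> \<bar>y a\<bar> \<le> l1norm y"
  using sum_le_l1norm[of y "{a}"] by simp

lemma ell1_add: assumes "u \<in> ell1" "v \<in> ell1"
  shows "(\<lambda>a. u a + v a) \<in> ell1" and "l1norm (\<lambda>a. u a + v a) \<le> l1norm u + l1norm v"
proof -
  have *: "(\<Sum>a\<in>F. \<bar>u a + v a\<bar>) \<le> l1norm u + l1norm v" if "finite F" for F
  proof -
    have "(\<Sum>a\<in>F. \<bar>u a + v a\<bar>) \<le> (\<Sum>a\<in>F. \<bar>u a\<bar> + \<bar>v a\<bar>)" by (intro sum_mono) auto
    also have "\<dots> = (\<Sum>a\<in>F. \<bar>u a\<bar>) + (\<Sum>a\<in>F. \<bar>v a\<bar>)" by (simp add: sum.distrib)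
    also have "\<dots> \<le> l1norm u + l1norm v" by (intro add_mono sum_le_l1norm assms that)
    finally show ?thesis .
  qed
  then show "(\<lambda>a. u a + v a) \<in> ell1" using ell1_iff_bdd by blast
  show "l1norm (\<lambda>a. u a + v a) \<le> l1norm u + l1norm v" by (rule l1norm_le) (rule *)
qed

lemma ell1_scale: assumes "u \<in> ell1"
  shows "(\<lambda>a. c * u a) \<in> ell1" and "l1norm (\<lambda>a. c * u a) = \<bar>c\<bar> * l1norm u"
proof -
  have s: "(\<lambda>a. \<bar>u a\<bar>) summable_on UNIV" using assms by (simp add: ell1_def)
  show "(\<lambda>a. c * u a) \<in> ell1" unfolding ell1_def
    using summable_on_cmult_right[OF s, of "\<bar>c\<bar>"] by (simp add: abs_mult)
  show "l1norm (\<lambda>a. c * u a) = \<bar>c\<bar> * l1norm u" unfolding l1norm_def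
    using infsum_cmult_right[of "\<bar>c\<bar>" "\<lambda>a. \<bar>u a\<bar>" UNIV] s by (simp add: abs_mult)
qed

lemma ell1_minus: assumes "u \<in> ell1" "v \<in> ell1"
  shows "(\<lambda>a. u a - v a) \<in> ell1"
  using ell1_add(1)[OF assms(1) ell1_scale(1)[OF assms(2), of "-1"]] by simp

lemma l1norm_cong: "(\<And>a. \<bar>u a\<bar> = \<bar>v a\<bar>) \<Longrightarrow> l1norm u = l1norm v"
  unfolding l1norm_def by simp

lemma l1norm_zero: "u \<in> ell1 \<Longrightarrow> l1norm u = 0 \<Longrightarrow> u a = 0"
  using abs_le_l1norm[of u a] by simp

lemma l1dist_commute: "l1dist u v = l1dist v u"
  unfolding l1dist_def by (rule l1norm_cong) auto

lemma l1dist_triangle: assumes "u \<in> ell1" "v \<in> ell1" "w \<in> ell1"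
  shows "l1dist u w \<le> l1dist u v + l1dist v w"
proof -
  have "l1dist u w = l1norm (\<lambda>a. (u a - v a) + (v a - w a))" unfolding l1dist_def by simp
  also have "\<dots> \<le> l1dist u v + l1dist v w" unfolding l1dist_def
    by (intro ell1_add ell1_minus assms)
  finally show ?thesis .
qed

lemma c00_sub_ell1: "c00 \<subseteq> ell1"
proof
  fix y :: "'a \<Rightarrow> real" assume "y \<in> c00"
  then have fin: "finite {a. y a \<noteq> 0}" by (simp add: c00_def)
  have "(\<Sum>a\<in>F. \<bar>y a\<bar>) \<le> (\<Sum>a\<in>{a. y a \<noteq> 0}. \<bar>y a\<bar>)" if "finite F" for F
  proof -
    have "(\<Sum>a\<in>F. \<bar>y a\<bar>) = (\<Sum>a\<in>F \<inter> {a. y a \<noteq> 0}. \<bar>y a\<bar>)"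
      using that by (intro sum.mono_neutral_right) auto
    also have "\<dots> \<le> (\<Sum>a\<in>{a. y a \<noteq> 0}. \<bar>y a\<bar>)" using fin by (intro sum_mono2) auto
    finally show ?thesis .
  qed
  then show "y \<in> ell1" using ell1_iff_bdd by blast
qed

lemma metric_l1: "Y \<subseteq> ell1 \<Longrightarrow> Metric_space Y l1dist"
  apply unfold_locales
  subgoal by (simp add: l1dist_def l1norm_nonneg)
  subgoal by (rule l1dist_commute)
  subgoal for x y
    using l1norm_zero[of "\<lambda>a. x a - y a"] ell1_minus[of x y]
    by (auto simp: l1dist_def l1norm_def fun_eq_iff)
  subgoal by (rule l1dist_triangle) auto
  done

lemma ell1_sum: fixes u :: "'i \<Rightarrow> 'a \<Rightarrow> real" assumes "finite I" "\<And>i. i \<in> I \<Longrightarrow> u i \<in> ell1"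
  shows "(\<lambda>b. \<Sum>i\<in>I. u i b) \<in> ell1 \<and> l1norm (\<lambda>b. \<Sum>i\<in>I. u i b) \<le> (\<Sum>i\<in>I. l1norm (u i))"
  using assms
proof (induction I rule: finite_induct)
  case empty
  have "(\<lambda>b::'a. 0::real) \<in> ell1" using ell1_iff_bdd by fastforce
  moreover have "l1norm (\<lambda>b::'a. 0::real) = 0" by (simp add: l1norm_def)
  ultimately show ?case by simp
next
  case (insert j I)
  then have IH: "(\<lambda>b. \<Sum>i\<in>I. u i b) \<in> ell1" "l1norm (\<lambda>b. \<Sum>i\<in>I. u i b) \<le> (\<Sum>i\<in>I. l1norm (u i))"
    by auto
  have uj: "u j \<in> ell1" using insert by auto
  have eq: "(\<lambda>b. \<Sum>i\<in>insert j I. u i b) = (\<lambda>b. u j b + (\<Sum>i\<in>I. u i b))"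
    using insert by simp
  show ?case unfolding eq using ell1_add[OF uj IH(1)] IH(2) insert by simp
qed

lemma c00_sum: assumes "finite I" "\<And>i. i \<in> I \<Longrightarrow> u i \<in> c00"
  shows "(\<lambda>b. \<Sum>i\<in>I. c i * u i b) \<in> c00"
proof -
  have "{b. (\<Sum>i\<in>I. c i * u i b) \<noteq> 0} \<subseteq> (\<Union>i\<in>I. {b. u i b \<noteq> 0})"
  proof
    fix b assume "b \<in> {b. (\<Sum>i\<in>I. c i * u i b) \<noteq> 0}"
    then obtain i where "i \<in> I" "c i * u i b \<noteq> 0" by (metis (mono_tags, lifting) mem_Collect_eq sum.neutral)
    then show "b \<in> (\<Union>i\<in>I. {b. u i b \<noteq> 0})" by auto
  qed
  moreover have "finite (\<Union>i\<in>I. {b. u i b \<noteq> 0})" using assms by (auto simp: c00_def)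
  ultimately show ?thesis unfolding c00_def by (auto intro: finite_subset)
qed

lemma l1dist_coord: "y \<in> ell1 \<Longrightarrow> z \<in> ell1 \<Longrightarrow> \<bar>y a - z a\<bar> \<le> l1dist y z"
  unfolding l1dist_def using abs_le_l1norm[OF ell1_minus, of y z a] by simp

lemma l1dist_sum_coord: "y \<in> ell1 \<Longrightarrow> z \<in> ell1 \<Longrightarrow> finite F \<Longrightarrow> (\<Sum>a\<in>F. \<bar>y a - z a\<bar>) \<le> l1dist y z"
  unfolding l1dist_def using sum_le_l1norm[OF ell1_minus, of y z F] by simp

lemma cont_local:
  fixes g :: "'x::topological_space \<Rightarrow> real"
  assumes "\<And>x0 e. e > 0 \<Longrightarrow> \<exists>W. open W \<and> x0 \<in> W \<and> (\<forall>x\<in>W. \<bar>g x - g x0\<bar> < e)"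
  shows "continuous_on UNIV g"
  unfolding continuous_on_topological
proof (intro ballI allI impI)
  fix x0 B assume "open B" "g x0 \<in> B"
  then obtain e where e: "e > 0" "ball (g x0) e \<subseteq> B" by (meson openE)
  obtain W where W: "open W" "x0 \<in> W" "\<forall>x\<in>W. \<bar>g x - g x0\<bar> < e" using assms[OF e(1)] by blast
  show "\<exists>A. open A \<and> x0 \<in> A \<and> (\<forall>y\<in>UNIV. y \<in> A \<longrightarrow> g y \<in> B)"
    using W e by (intro exI[of _ W]) (auto simp: dist_real_def abs_minus_commute)
qed

lemma cont_localD:
  fixes g :: "'x::topological_space \<Rightarrow> real"
  assumes "continuous_on UNIV g" "e > 0"
  shows "\<exists>W. open W \<and> p \<in> W \<and> (\<forall>x\<in>W. \<bar>g x - g p\<bar> < e)"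
proof -
  have "open (g -` ball (g p) e)"
    using assms(1) by (simp add: continuous_on_open_vimage)
  then show ?thesis using assms(2)
    by (intro exI[of _ "g -` ball (g p) e"]) (auto simp: dist_real_def abs_minus_commute)
qed

lemma cont_to_l1:
  fixes f :: "'x::topological_space \<Rightarrow> 'a \<Rightarrow> real"
  assumes Y: "Y \<subseteq> ell1" and fY: "\<And>x. f x \<in> Y"
    and loc: "\<And>x0 e. e > 0 \<Longrightarrow> \<exists>W. open W \<and> x0 \<in> W \<and> (\<forall>x\<in>W. l1dist (f x0) (f x) < e)"
  shows "continuous_map euclidean (l1top Y) f"
proof -
  interpret M: Metric_space Y l1dist by (rule metric_l1[OF Y])
  show ?thesis unfolding l1top_def M.continuous_map_to_metric
    using loc fY by (fastforce simp: M.mball_def)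
qed

lemma cont_from_l1:
  fixes f :: "'x::topological_space \<Rightarrow> 'a \<Rightarrow> real"
  assumes Y: "Y \<subseteq> ell1" and c: "continuous_map euclidean (l1top Y) f"
  shows "f x \<in> Y" and "e > 0 \<Longrightarrow> \<exists>W. open W \<and> x0 \<in> W \<and> (\<forall>x\<in>W. l1dist (f x0) (f x) < e)"
proof -
  interpret M: Metric_space Y l1dist by (rule metric_l1[OF Y])
  have c': "continuous_map euclidean M.mtopology f" using c by (simp add: l1top_def)
  show "f x \<in> Y" using continuous_map_image_subset_topspace[OF c'] by auto
  assume "e > 0"
  then show "\<exists>W. open W \<and> x0 \<in> W \<and> (\<forall>x\<in>W. l1dist (f x0) (f x) < e)"
    using c' unfolding M.continuous_map_to_metric by (fastforce simp: M.mball_def)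
qed

lemma cont_coord:
  fixes f :: "'x::topological_space \<Rightarrow> 'a \<Rightarrow> real"
  assumes Y: "Y \<subseteq> ell1" and c: "continuous_map euclidean (l1top Y) f"
  shows "continuous_on UNIV (\<lambda>x. f x a)"
proof (rule cont_local)
  fix x0 and e :: real assume "e > 0"
  then obtain W where W: "open W" "x0 \<in> W" "\<forall>x\<in>W. l1dist (f x0) (f x) < e"
    using cont_from_l1(2)[OF Y c] by blast
  have "\<bar>f x a - f x0 a\<bar> < e" if "x \<in> W" for x
    using l1dist_coord[of "f x0" "f x" a] cont_from_l1(1)[OF Y c] Y W that
    by (smt (verit, best) subsetD)
  then show "\<exists>W. open W \<and> x0 \<in> W \<and> (\<forall>x\<in>W. \<bar>f x a - f x0 a\<bar> < e)" using W by blast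
qed

lemma convex_funD: "convex_fun_set S \<Longrightarrow> y \<in> S \<Longrightarrow> z \<in> S \<Longrightarrow> 0 \<le> t \<Longrightarrow> t \<le> 1 \<Longrightarrow> (\<lambda>a. t * y a + (1 - t) * z a) \<in> S"
  unfolding convex_fun_set_def by blast

lemma convex_comb:
  assumes S: "convex_fun_set S" and "finite I" "I \<noteq> {}"
  shows "(\<forall>i\<in>I. 0 \<le> w i) \<longrightarrow> sum w I = 1 \<longrightarrow> (\<forall>i\<in>I. y i \<in> S) \<longrightarrow> (\<lambda>b. \<Sum>i\<in>I. w i * y i b) \<in> S"
  using assms(2,3)
proof (induction I arbitrary: w rule: finite_ne_induct)
  case (singleton j)
  then show ?case by simp
next
  case (insert j I)
  show ?case
  proof (intro impI)
    assume w0: "\<forall>i\<in>insert j I. 0 \<le> w i" and w1: "sum w (insert j I) = 1" and yS: "\<forall>i\<in>insert j I. y i \<in> S"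
    have sI: "sum w (insert j I) = w j + sum w I" using insert by simp
    have sI0: "sum w I \<ge> 0" using w0 by (intro sum_nonneg) auto
    show "(\<lambda>b. \<Sum>i\<in>insert j I. w i * y i b) \<in> S"
    proof (cases "sum w I = 0")
      case True
      then have "\<forall>i\<in>I. w i = 0" using w0 insert(1) sum_nonneg_eq_0_iff by auto
      then have "(\<lambda>b. \<Sum>i\<in>insert j I. w i * y i b) = y j" using insert True sI w1 by (auto simp: fun_eq_iff)
      then show ?thesis using yS by simp
    next
      case False
      define s where "s = sum w I"
      have s0: "s > 0" using False sI0 s_def by simp
      have "(\<lambda>b. \<Sum>i\<in>I. (w i / s) * y i b) \<in> S"
        using insert.IH[of "\<lambda>i. w i / s"] w0 yS s0 by (auto simp: s_def sum_divide_distrib[symmetric])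
      moreover have "y j \<in> S" using yS by simp
      moreover have "0 \<le> w j" "w j \<le> 1" using w0 sI w1 sI0 by auto
      ultimately have "(\<lambda>b. w j * y j b + (1 - w j) * (\<Sum>i\<in>I. (w i / s) * y i b)) \<in> S"
        using convex_funD[OF S] by blast
      moreover have "(\<lambda>b. w j * y j b + (1 - w j) * (\<Sum>i\<in>I. (w i / s) * y i b)) = (\<lambda>b. \<Sum>i\<in>insert j I. w i * y i b)"
      proof
        fix b
        have "1 - w j = s" using sI w1 s_def by simp
        then have "(1 - w j) * (\<Sum>i\<in>I. (w i / s) * y i b) = (\<Sum>i\<in>I. w i * y i b)"
          using s0 by (simp add: sum_distrib_left)
        then show "w j * y j b + (1 - w j) * (\<Sum>i\<in>I. (w i / s) * y i b) = (\<Sum>i\<in>insert j I. w i * y i b)"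
          using insert by simp
      qed
      ultimately show ?thesis by simp
    qed
  qed
qed

lemma LF:
  fixes \<xi> :: "'a \<Rightarrow> 'x::topological_space \<Rightarrow> real"
  assumes pu: "partition_of_unity \<xi>"
  shows "\<exists>\<phi> :: 'a \<Rightarrow> 'x \<Rightarrow> real. (\<forall>a. continuous_on UNIV (\<phi> a)) \<and> (\<forall>a x. 0 \<le> \<phi> a x) \<and> (\<forall>a x. \<phi> a x \<noteq> 0 \<longrightarrow> \<xi> a x \<noteq> 0)
     \<and> (\<forall>x0. \<exists>W F. open W \<and> x0 \<in> W \<and> finite F \<and> (\<forall>x\<in>W. \<forall>a. a \<notin> F \<longrightarrow> \<phi> a x = 0))
     \<and> (\<forall>x. finite {a. \<phi> a x \<noteq> 0} \<and> sum (\<lambda>a. \<phi> a x) {a. \<phi> a x \<noteq> 0} = 1)"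
proof -
  have cont: "\<And>a. continuous_on UNIV (\<xi> a)" and rng0: "\<And>a x. 0 \<le> \<xi> a x" and rng1: "\<And>a x. \<xi> a x \<le> 1"
    and hs: "\<And>x. ((\<lambda>a. \<xi> a x) has_sum 1) UNIV"
    using pu unfolding partition_of_unity_def by auto
  define s where "s x = (SUP a. \<xi> a x)" for x
  have bdd: "bdd_above (range (\<lambda>a. \<xi> a x))" for x by (rule bdd_aboveI[of _ 1]) (auto intro: rng1)
  have le_s: "\<xi> a x \<le> s x" for a x unfolding s_def by (rule cSUP_upper[OF UNIV_I bdd])
  have partial: "finite F \<Longrightarrow> (\<Sum>a\<in>F. \<xi> a x) \<le> 1" for F x
    by (rule finite_sum_le_has_sum[OF hs]) (auto intro: rng0)
  have big_sum: "\<exists>F. finite F \<and> (\<Sum>a\<in>F. \<xi> a x) > 1 - \<delta>" if dpos: "\<delta> > 0" for x \<delta>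
  proof -
    obtain F where F: "finite F" "dist (\<Sum>a\<in>F. \<xi> a x) 1 \<le> \<delta>/2"
      using has_sum_finite_approximation[OF hs half_gt_zero[OF dpos]] by blast
    have "1 - \<delta> < (\<Sum>a\<in>F. \<xi> a x)" using abs_le_D2[OF F(2)[unfolded dist_real_def]] dpos by linarith
    then show ?thesis using F(1) by blast
  qed
  have spos: "s x > 0" for x
  proof -
    obtain F where F: "finite F" "(\<Sum>a\<in>F. \<xi> a x) > 0" using big_sum[of 1 x] by auto
    have "\<exists>a\<in>F. \<xi> a x > 0"
    proof (rule ccontr)
      assume "\<not> (\<exists>a\<in>F. \<xi> a x > 0)"
      then have "(\<Sum>a\<in>F. \<xi> a x) \<le> 0" by (intro sum_nonpos) (auto simp: not_less)
      then show False using F by simp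
    qed
    then obtain a where "\<xi> a x > 0" by blast
    then show ?thesis using le_s[of a x] by simp
  qed
  have tail: "\<exists>F W. finite F \<and> open W \<and> p \<in> W \<and> (\<forall>x\<in>W. \<forall>b. b \<notin> F \<longrightarrow> \<xi> b x < \<delta>)"
    if dpos: "\<delta> > 0" for p \<delta>
  proof -
    obtain F where F: "finite F" "(\<Sum>a\<in>F. \<xi> a p) > 1 - \<delta>" using big_sum[OF dpos] by blast
    define W where "W = (\<lambda>x. \<Sum>a\<in>F. \<xi> a x) -` {1-\<delta><..}"
    have "continuous_on UNIV (\<lambda>x. \<Sum>a\<in>F. \<xi> a x)" by (intro continuous_on_sum cont)
    then have "open W" unfolding W_def by (simp add: continuous_on_open_vimage)
    moreover have "p \<in> W" using F unfolding W_def by simp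
    moreover have "\<xi> b x < \<delta>" if "x \<in> W" "b \<notin> F" for x b
    proof -
      have "(\<Sum>a\<in>insert b F. \<xi> a x) \<le> 1" using partial F by simp
      then have "\<xi> b x + (\<Sum>a\<in>F. \<xi> a x) \<le> 1" using F that by simp
      then show ?thesis using that unfolding W_def by simp
    qed
    ultimately show ?thesis using F by blast
  qed
  have exists_big: "\<exists>a. \<xi> a x > y" if "y < s x" for x y
  proof -
    have "y < (SUP a. \<xi> a x)" using that unfolding s_def .
    then show ?thesis using less_cSUP_iff[of UNIV "\<lambda>a. \<xi> a x" y] bdd[of x] by auto
  qed
  have s_cont: "continuous_on UNIV s"
  proof (rule cont_local)
    fix x0 and e :: real assume e: "e > 0"
    define m where "m = s x0"
    obtain a where a: "\<xi> a x0 > m - e/2" using exists_big[where x=x0 and y="m - e/2"] e m_def by auto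
    have e2: "e/2 > 0" using e by simp
    obtain W1 where W1: "open W1" "x0 \<in> W1" "\<forall>x\<in>W1. \<bar>\<xi> a x - \<xi> a x0\<bar> < e/2"
      using cont_localD[OF cont[of a] e2, where p=x0] by blast
    obtain F W2 where W2: "finite F" "open W2" "x0 \<in> W2" "\<forall>x\<in>W2. \<forall>b. b \<notin> F \<longrightarrow> \<xi> b x < m + e/2"
      using tail[where p=x0 and \<delta>="m + e/2"] spos[of x0] e m_def by auto
    have "\<forall>b. \<exists>V. open V \<and> x0 \<in> V \<and> (\<forall>x\<in>V. \<bar>\<xi> b x - \<xi> b x0\<bar> < e/2)"
      using cont_localD[OF cont e2, where p=x0] by blast
    then have "\<exists>V. \<forall>b. open (V b) \<and> x0 \<in> V b \<and> (\<forall>x\<in>V b. \<bar>\<xi> b x - \<xi> b x0\<bar> < e/2)"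
      by (rule choice)
    then obtain V where V0: "\<forall>b. open (V b) \<and> x0 \<in> V b \<and> (\<forall>x\<in>V b. \<bar>\<xi> b x - \<xi> b x0\<bar> < e/2)"
      by blast
    have V: "\<And>b. open (V b)" "\<And>b. x0 \<in> V b" "\<And>b x. x \<in> V b \<Longrightarrow> \<bar>\<xi> b x - \<xi> b x0\<bar> < e/2"
      using V0 by auto
    define W where "W = W1 \<inter> W2 \<inter> (\<Inter>b\<in>F. V b)"
    have "open W" unfolding W_def using W1 W2 V by (intro open_Int open_INT) auto
    moreover have "x0 \<in> W" unfolding W_def using W1 W2 V by auto
    moreover have "\<bar>s x - s x0\<bar> < e" if "x \<in> W" for x
    proof -
      have "x \<in> W1" using that unfolding W_def by simp
      then have "\<bar>\<xi> a x - \<xi> a x0\<bar> < e/2" using W1 by blast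
      then have "\<xi> a x > \<xi> a x0 - e/2" using abs_less_iff[of "\<xi> a x - \<xi> a x0" "e/2"] by linarith
      then have lo: "s x > m - e" using a le_s[of a x] by linarith
      have "\<xi> b x \<le> m + e/2" for b
      proof (cases "b \<in> F")
        case True
        then have "\<bar>\<xi> b x - \<xi> b x0\<bar> < e/2" using V that unfolding W_def by blast
        then show ?thesis using le_s[of b x0] m_def abs_less_iff[of "\<xi> b x - \<xi> b x0" "e/2"] by linarith
      next
        case False
        have "x \<in> W2" using that unfolding W_def by simp
        then show ?thesis using W2 False by fastforce
      qed
      then have "s x \<le> m + e/2" unfolding s_def by (intro cSUP_least) auto
      then show ?thesis using lo e m_def by simp
    qed
    ultimately show "\<exists>W. open W \<and> x0 \<in> W \<and> (\<forall>x\<in>W. \<bar>s x - s x0\<bar> < e)" by blast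
  qed
  define \<psi> where "\<psi> a x = max 0 (\<xi> a x - s x / 2)" for a x
  have \<psi>_cont: "continuous_on UNIV (\<psi> a)" for a
    unfolding \<psi>_def by (intro continuous_on_max continuous_on_const continuous_on_diff continuous_on_divide cont s_cont) auto
  have \<psi>_nn: "0 \<le> \<psi> a x" for a x unfolding \<psi>_def by simp
  have \<psi>_supp: "\<psi> a x \<noteq> 0 \<Longrightarrow> \<xi> a x \<noteq> 0" for a x
    unfolding \<psi>_def using spos[of x] by (auto simp: max_def split: if_splits)
  have \<psi>_lf: "\<exists>W F. open W \<and> x0 \<in> W \<and> finite F \<and> (\<forall>x\<in>W. \<forall>b. b \<notin> F \<longrightarrow> \<psi> b x = 0)" for x0
  proof -
    define m where "m = s x0"
    have m: "m > 0" using spos m_def by simp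
    obtain F W2 where W2: "finite F" "open W2" "x0 \<in> W2" "\<forall>x\<in>W2. \<forall>b. b \<notin> F \<longrightarrow> \<xi> b x < m/4"
      using tail[where p=x0 and \<delta>="m/4"] m by auto
    obtain W1 where W1: "open W1" "x0 \<in> W1" "\<forall>x\<in>W1. \<bar>s x - s x0\<bar> < m/2"
      using cont_localD[OF s_cont half_gt_zero[OF m], where p=x0] by blast
    have "\<psi> b x = 0" if "x \<in> W1 \<inter> W2" "b \<notin> F" for x b
    proof -
      have "x \<in> W1" using that by blast
      then have "\<bar>s x - s x0\<bar> < m/2" using W1 by blast
      then have "s x > m/2" using m_def abs_less_iff[of "s x - s x0" "m/2"] by linarith
      moreover have "\<xi> b x < m/4" using W2 that by blast
      ultimately show ?thesis unfolding \<psi>_def by simp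
    qed
    then show ?thesis using W1 W2 by (intro exI[of _ "W1 \<inter> W2"] exI[of _ F]) auto
  qed
  have supp_fin: "finite {a. \<psi> a x \<noteq> 0}" for x
  proof -
    obtain W F where WF: "open W" "x \<in> W" "finite F" "\<forall>y\<in>W. \<forall>b. b \<notin> F \<longrightarrow> \<psi> b y = 0"
      using \<psi>_lf[of x] by blast
    have "{a. \<psi> a x \<noteq> 0} \<subseteq> F" using WF(2,4) by blast
    then show ?thesis using WF(3) by (rule finite_subset)
  qed
  define P where "P x = sum (\<lambda>a. \<psi> a x) {a. \<psi> a x \<noteq> 0}" for x
  have Ppos: "P x > 0" for x
  proof -
    have "s x / 2 < s x" using spos[of x] by simp
    then obtain a where "\<xi> a x > s x / 2" using exists_big by blast
    then have pa: "\<psi> a x > 0" unfolding \<psi>_def by simp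
    show ?thesis unfolding P_def
    proof (rule sum_pos2[where i=a])
      show "finite {a. \<psi> a x \<noteq> 0}" by (rule supp_fin)
      show "a \<in> {a. \<psi> a x \<noteq> 0}" using pa by simp
      show "0 < \<psi> a x" by (rule pa)
      show "\<And>i. i \<in> {a. \<psi> a x \<noteq> 0} \<Longrightarrow> 0 \<le> \<psi> i x" by (rule \<psi>_nn)
    qed
  qed
  have P_loc: "P x = (\<Sum>a\<in>F. \<psi> a x)" if PF: "finite F" "{a. \<psi> a x \<noteq> 0} \<subseteq> F" for x F
    unfolding P_def
  proof (rule sum.mono_neutral_right[symmetric])
    show "finite F" by (rule PF(1))
    show "{a. \<psi> a x \<noteq> 0} \<subseteq> F" by (rule PF(2))
    show "\<forall>i\<in>F - {a. \<psi> a x \<noteq> 0}. \<psi> i x = 0" by blast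
  qed
  have P_cont: "continuous_on UNIV P"
  proof (rule cont_local)
    fix x0 and e :: real assume e: "e > 0"
    obtain W F where W: "open W" "x0 \<in> W" "finite F" "\<forall>x\<in>W. \<forall>b. b \<notin> F \<longrightarrow> \<psi> b x = 0"
      using \<psi>_lf[of x0] by blast
    have Fc: "continuous_on UNIV (\<lambda>x. \<Sum>a\<in>F. \<psi> a x)" by (intro continuous_on_sum \<psi>_cont)
    obtain W' where W': "open W'" "x0 \<in> W'" "\<forall>x\<in>W'. \<bar>(\<Sum>a\<in>F. \<psi> a x) - (\<Sum>a\<in>F. \<psi> a x0)\<bar> < e"
      using cont_localD[OF Fc e, where p=x0] by blast
    have "\<bar>P x - P x0\<bar> < e" if "x \<in> W \<inter> W'" for x
    proof -
      have "P x = (\<Sum>a\<in>F. \<psi> a x)" using that W by (intro P_loc) auto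
      moreover have "P x0 = (\<Sum>a\<in>F. \<psi> a x0)" using W by (intro P_loc) auto
      ultimately show ?thesis using W' that by simp
    qed
    then show "\<exists>W. open W \<and> x0 \<in> W \<and> (\<forall>x\<in>W. \<bar>P x - P x0\<bar> < e)" using W W'
      by (intro exI[of _ "W \<inter> W'"]) auto
  qed
  define \<phi> where "\<phi> a x = \<psi> a x / P x" for a x
  have \<phi>_nz: "\<phi> a x \<noteq> 0 \<longleftrightarrow> \<psi> a x \<noteq> 0" for a x unfolding \<phi>_def using Ppos[of x] by simp
  have f1: "continuous_on UNIV (\<phi> a)" for a
    unfolding \<phi>_def using Ppos by (intro continuous_on_divide \<psi>_cont P_cont) (auto simp: less_le)
  have f2: "0 \<le> \<phi> a x" for a x unfolding \<phi>_def using Ppos[of x] \<psi>_nn[of a x] by simp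
  have f3: "\<phi> a x \<noteq> 0 \<longrightarrow> \<xi> a x \<noteq> 0" for a x using \<phi>_nz[of a x] \<psi>_supp[of a x] by blast
  have f4: "\<exists>W F. open W \<and> x0 \<in> W \<and> finite F \<and> (\<forall>x\<in>W. \<forall>a. a \<notin> F \<longrightarrow> \<phi> a x = 0)" for x0
  proof -
    obtain W F where "open W" "x0 \<in> W" "finite F" "\<forall>x\<in>W. \<forall>b. b \<notin> F \<longrightarrow> \<psi> b x = 0"
      using \<psi>_lf[of x0] by blast
    moreover have "\<forall>x\<in>W. \<forall>b. b \<notin> F \<longrightarrow> \<phi> b x = 0" using calculation(4) by (simp add: \<phi>_def)
    ultimately show ?thesis by blast
  qed
  have f5: "finite {a. \<phi> a x \<noteq> 0} \<and> sum (\<lambda>a. \<phi> a x) {a. \<phi> a x \<noteq> 0} = 1" for x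
  proof -
    have eq: "{a. \<phi> a x \<noteq> 0} = {a. \<psi> a x \<noteq> 0}" by (simp add: \<phi>_nz)
    show ?thesis unfolding eq using supp_fin[of x] Ppos[of x]
      by (simp add: \<phi>_def sum_divide_distrib[symmetric] P_def[symmetric])
  qed
  have f5a: "\<forall>x. finite {a. \<phi> a x \<noteq> 0} \<and> sum (\<lambda>a. \<phi> a x) {a. \<phi> a x \<noteq> 0} = 1"
    using f5 by blast
  have f4a: "\<forall>x0. \<exists>W F. open W \<and> x0 \<in> W \<and> finite F \<and> (\<forall>x\<in>W. \<forall>a. a \<notin> F \<longrightarrow> \<phi> a x = 0)"
    using f4 by blast
  have f123: "(\<forall>a. continuous_on UNIV (\<phi> a))" "(\<forall>a x. 0 \<le> \<phi> a x)" "(\<forall>a x. \<phi> a x \<noteq> 0 \<longrightarrow> \<xi> a x \<noteq> 0)"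
    using f1 f2 f3 by blast+
  show ?thesis
    using f123 f4a f5a by blast
qed

lemma enc_inj0:
  assumes "inj i" "a0 \<notin> range i"
  shows "\<forall>ys. foldr (\<lambda>x acc. i (x, acc)) xs a0 = foldr (\<lambda>x acc. i (x, acc)) ys a0 \<longrightarrow> xs = ys"
proof (induction xs)
  case Nil
  show ?case
  proof (intro allI impI)
    fix ys assume eq: "foldr (\<lambda>x acc. i (x, acc)) [] a0 = foldr (\<lambda>x acc. i (x, acc)) ys a0"
    show "[] = ys"
    proof (cases ys)
      case Nil then show ?thesis by simp
    next
      case (Cons y ys')
      then have "a0 = i (y, foldr (\<lambda>x acc. i (x, acc)) ys' a0)" using eq by simp
      then have "a0 \<in> range i" by (rule range_eqI)
      then show ?thesis using assms(2) by simp
    qed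
  qed
next
  case (Cons x xs)
  show ?case
  proof (intro allI impI)
    fix ys assume eq: "foldr (\<lambda>x acc. i (x, acc)) (x # xs) a0 = foldr (\<lambda>x acc. i (x, acc)) ys a0"
    show "x # xs = ys"
    proof (cases ys)
      case Nil
      then have "a0 = i (x, foldr (\<lambda>x acc. i (x, acc)) xs a0)" using eq by simp
      then have "a0 \<in> range i" by (rule range_eqI)
      then show ?thesis using assms(2) by simp
    next
      case (Cons y ys')
      then have "i (x, foldr (\<lambda>x acc. i (x, acc)) xs a0) = i (y, foldr (\<lambda>x acc. i (x, acc)) ys' a0)"
        using eq by simp
      then have "(x, foldr (\<lambda>x acc. i (x, acc)) xs a0) = (y, foldr (\<lambda>x acc. i (x, acc)) ys' a0)"
        by (rule injD[OF assms(1)])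
      then have "x = y" "xs = ys'" using Cons.IH by auto
      then show ?thesis using Cons by simp
    qed
  qed
qed

lemma enc_inj:
  assumes "inj i" "a0 \<notin> range i"
  shows "foldr (\<lambda>x acc. i (x, acc)) xs a0 = foldr (\<lambda>x acc. i (x, acc)) ys a0 \<Longrightarrow> xs = ys"
  using enc_inj0[OF assms] by blast

lemma surj_lists:
  assumes inf: "infinite (UNIV::'a set)"
  shows "\<exists>g :: 'a \<Rightarrow> ('a \<times> rat) list. surj g"
proof -
  have "\<exists>f::nat \<Rightarrow> 'a. inj f \<and> range f \<subseteq> UNIV" using infinite_iff_countable_subset[THEN iffD1, OF inf] .
  then obtain f :: "nat \<Rightarrow> 'a" where f: "inj f" by (elim exE conjE)
  have "\<exists>p. bij_betw p ((UNIV::'a set) \<times> (UNIV::'a set)) (UNIV::'a set)"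
    by (rule iffD2[OF card_of_ordIso card_of_Times_same_infinite[OF inf]])
  then obtain p :: "'a \<times> 'a \<Rightarrow> 'a" where p: "bij_betw p ((UNIV::'a set) \<times> (UNIV::'a set)) UNIV"
    by blast
  have pinj: "inj p" using bij_betw_imp_inj_on[OF p] by simp
  define k where "k x = (if x \<in> range f then f (Suc (inv f x)) else x)" for x
  have kinj: "inj k"
  proof (rule injI)
    fix x y assume kxy: "k x = k y"
    show "x = y"
    proof (cases "x \<in> range f"; cases "y \<in> range f")
      assume "x \<in> range f" "y \<in> range f"
      then have "f (Suc (inv f x)) = f (Suc (inv f y))" using kxy unfolding k_def by simp
      then have "Suc (inv f x) = Suc (inv f y)" using injD[OF f] by blast
      then have "inv f x = inv f y" by simp
      then have "f (inv f x) = f (inv f y)" by simp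
      then show ?thesis using f_inv_into_f[OF \<open>x \<in> range f\<close>] f_inv_into_f[OF \<open>y \<in> range f\<close>] by simp
    next
      assume "x \<in> range f" "y \<notin> range f"
      then show ?thesis using kxy unfolding k_def by auto
    next
      assume "x \<notin> range f" "y \<in> range f"
      then show ?thesis using kxy unfolding k_def by auto
    next
      assume "x \<notin> range f" "y \<notin> range f"
      then show ?thesis using kxy unfolding k_def by auto
    qed
  qed
  have k0: "f 0 \<notin> range k"
  proof
    assume "f 0 \<in> range k"
    then obtain x where x: "k x = f 0" by auto
    show False
    proof (cases "x \<in> range f")
      case True
      then have "f (Suc (inv f x)) = f 0" using x unfolding k_def by simp
      then have "Suc (inv f x) = 0" using injD[OF f] by blast
      then show False by simp
    next
      case False
      then show False using x unfolding k_def by auto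
    qed
  qed
  define i where "i z = k (p z)" for z
  have "i = k \<circ> p" by (rule ext) (simp add: i_def)
  then have iinj: "inj i" using inj_compose[OF kinj pinj] by simp
  have i0: "f 0 \<notin> range i" using k0 unfolding i_def by auto
  define e where "e z = p (fst z, f (to_nat (snd z :: rat)))" for z :: "'a \<times> rat"
  have einj: "inj e"
  proof (rule injI)
    fix z w assume "e z = e w"
    then have "p (fst z, f (to_nat (snd z))) = p (fst w, f (to_nat (snd w)))"
      unfolding e_def .
    then have "(fst z, f (to_nat (snd z))) = (fst w, f (to_nat (snd w)))"
      by (rule injD[OF pinj])
    then have 1: "fst z = fst w" and 2: "f (to_nat (snd z)) = f (to_nat (snd w))" by auto
    have "to_nat (snd z) = to_nat (snd w)" by (rule injD[OF f 2])
    then have "snd z = snd w" by simp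
    then show "z = w" using 1 by (simp add: prod_eq_iff)
  qed
  define E where "E l = foldr (\<lambda>x acc. i (x, acc)) (map e l) (f 0)" for l
  have Einj: "inj E"
  proof (rule injI)
    fix l l' assume "E l = E l'"
    then have "map e l = map e l'" unfolding E_def by (rule enc_inj[OF iinj i0])
    then show "l = l'" using einj by simp
  qed
  have "surj (inv E)" using Einj by (simp add: inj_imp_surj_inv)
  then show ?thesis by blast
qed

lemma sum_list_nz: "sum_list (map g l) \<noteq> (0::real) \<Longrightarrow> \<exists>z\<in>set l. g z \<noteq> 0"
  by (induction l) auto

definition lf :: "('a \<times> rat) list \<Rightarrow> 'a \<Rightarrow> real" where
  "lf l b = sum_list (map (\<lambda>z. if fst z = b then of_rat (snd z) else 0) l)"

lemma lf_c00: "lf l \<in> c00"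
proof -
  have "{b. lf l b \<noteq> 0} \<subseteq> fst ` set l"
  proof
    fix b assume "b \<in> {b. lf l b \<noteq> 0}"
    then have "sum_list (map (\<lambda>z. if fst z = b then of_rat (snd z) else (0::real)) l) \<noteq> 0"
      unfolding lf_def by simp
    then obtain z where "z \<in> set l" "(if fst z = b then of_rat (snd z) else (0::real)) \<noteq> 0"
      using sum_list_nz by blast
    then show "b \<in> fst ` set l" by (auto split: if_splits)
  qed
  then have "finite {b. lf l b \<noteq> 0}" by (rule finite_subset) simp
  then show ?thesis unfolding c00_def by simp
qed

lemma l1_tail_bound:
  assumes y: "y \<in> ell1" and F: "finite F" and that: "\<And>b. b \<notin> F \<Longrightarrow> q b = 0"
  shows "l1norm (\<lambda>b. q b - y b) \<le> (\<Sum>a\<in>F. \<bar>q a - y a\<bar>) + (l1norm y - (\<Sum>a\<in>F. \<bar>y a\<bar>))"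
proof (rule l1norm_le)
  fix G :: "'a set" assume G: "finite G"
  have "(\<Sum>a\<in>G. \<bar>q a - y a\<bar>) = (\<Sum>a\<in>G \<inter> F. \<bar>q a - y a\<bar>) + (\<Sum>a\<in>G - F. \<bar>q a - y a\<bar>)"
    by (rule sum.Int_Diff[OF G])
  also have "(\<Sum>a\<in>G - F. \<bar>q a - y a\<bar>) = (\<Sum>a\<in>G - F. \<bar>y a\<bar>)"
    using that by (intro sum.cong) auto
  also have "(\<Sum>a\<in>G \<inter> F. \<bar>q a - y a\<bar>) \<le> (\<Sum>a\<in>F. \<bar>q a - y a\<bar>)"
    using F by (intro sum_mono2) auto
  also have "(\<Sum>a\<in>G - F. \<bar>y a\<bar>) \<le> l1norm y - (\<Sum>a\<in>F. \<bar>y a\<bar>)"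
  proof -
    have "(\<Sum>a\<in>(G - F) \<union> F. \<bar>y a\<bar>) \<le> l1norm y" using G F by (intro sum_le_l1norm y) auto
    moreover have "(\<Sum>a\<in>(G - F) \<union> F. \<bar>y a\<bar>) = (\<Sum>a\<in>G - F. \<bar>y a\<bar>) + (\<Sum>a\<in>F. \<bar>y a\<bar>)"
      using G F by (intro sum.union_disjoint) auto
    ultimately show ?thesis by simp
  qed
  finally show "(\<Sum>a\<in>G. \<bar>q a - y a\<bar>) \<le> (\<Sum>a\<in>F. \<bar>q a - y a\<bar>) + (l1norm y - (\<Sum>a\<in>F. \<bar>y a\<bar>))"
    by simp
qed

lemma lf_dense:
  assumes y: "y \<in> ell1" and r: "r > 0"
  shows "\<exists>l. l1dist (lf l) y < r"
proof -
  have s: "(\<lambda>a. \<bar>y a\<bar>) summable_on UNIV" using y by (simp add: ell1_def)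
  have r4: "r/4 > 0" using r by simp
  obtain F where F: "finite F" "dist (\<Sum>a\<in>F. \<bar>y a\<bar>) (l1norm y) \<le> r/4"
    using infsum_finite_approximation[OF s r4] unfolding l1norm_def by blast
  define c where "c = r / (4 * (real (card F) + 1))"
  have c: "c > 0" using r unfolding c_def by (simp add: add_pos_nonneg)
  have "\<exists>t::rat. y a - c < of_rat t \<and> of_rat t < y a + c" for a
    using c of_rat_dense[of "y a - c" "y a + c"] by simp
  then have "\<exists>t. \<forall>a. y a - c < of_rat (t a) \<and> of_rat (t a) < y a + c" by (rule choice[OF allI])
  then obtain t where t: "\<And>a. y a - c < of_rat (t a) \<and> of_rat (t a) < y a + c" by blast
  obtain xs where xs: "set xs = F" "distinct xs" using finite_distinct_list[OF F(1)] by blast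
  define l where "l = map (\<lambda>a. (a, t a)) xs"
  have lfl: "lf l b = (if b \<in> F then of_rat (t b) else 0)" for b
  proof -
    have "lf l b = sum_list (map (\<lambda>a. if a = b then of_rat (t a) else (0::real)) xs)"
      unfolding lf_def l_def by (simp add: comp_def cong: if_cong)
    also have "\<dots> = (\<Sum>a\<in>F. if a = b then of_rat (t a) else 0)"
      using xs by (simp add: sum_list_distinct_conv_sum_set)
    also have "\<dots> = (if b \<in> F then of_rat (t b) else 0)"
      using F(1) by simp
    finally show ?thesis .
  qed
  have "l1dist (lf l) y \<le> (\<Sum>a\<in>F. \<bar>lf l a - y a\<bar>) + (l1norm y - (\<Sum>a\<in>F. \<bar>y a\<bar>))"
    unfolding l1dist_def by (rule l1_tail_bound[OF y F(1)]) (simp add: lfl)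
  also have "(\<Sum>a\<in>F. \<bar>lf l a - y a\<bar>) \<le> (\<Sum>a\<in>F. c)"
  proof (rule sum_mono)
    fix a assume "a \<in> F"
    then show "\<bar>lf l a - y a\<bar> \<le> c" using t[of a] lfl[of a] by (simp add: abs_le_iff)
  qed
  also have "(\<Sum>a\<in>F. c) = real (card F) * c" by simp
  also have "real (card F) * c \<le> r/4"
  proof -
    have "real (card F) * c = r/4 * (real (card F) / (real (card F) + 1))"
      unfolding c_def by (simp add: field_simps)
    also have "\<dots> \<le> r/4 * 1" using r by (intro mult_left_mono) auto
    finally show ?thesis by simp
  qed
  also have "l1norm y - (\<Sum>a\<in>F. \<bar>y a\<bar>) \<le> r/4"
    using F(2) abs_le_D2[of "(\<Sum>a\<in>F. \<bar>y a\<bar>) - l1norm y" "r/4"] unfolding dist_real_def by linarith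
  finally have "l1dist (lf l) y \<le> r/4 + r/4" by simp
  then show ?thesis using r by (intro exI[of _ l]) simp
qed

lemma l1norm_sum_scale:
  fixes u :: "'i \<Rightarrow> 'a \<Rightarrow> real"
  assumes "finite I" "\<And>i. i \<in> I \<Longrightarrow> u i \<in> ell1"
  shows "l1norm (\<lambda>b. \<Sum>i\<in>I. c i * u i b) \<le> (\<Sum>i\<in>I. \<bar>c i\<bar> * l1norm (u i))"
proof -
  have "l1norm (\<lambda>b. \<Sum>i\<in>I. c i * u i b) \<le> (\<Sum>i\<in>I. l1norm (\<lambda>b. c i * u i b))"
    using ell1_sum[of I "\<lambda>i b. c i * u i b"] assms ell1_scale(1) by blast
  also have "\<dots> = (\<Sum>i\<in>I. \<bar>c i\<bar> * l1norm (u i))"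
    using assms(2) ell1_scale(2) by (intro sum.cong) auto
  finally show ?thesis .
qed

lemma sum_loc:
  fixes w :: "'i \<Rightarrow> real"
  assumes "finite F" "{i. w i \<noteq> 0} \<subseteq> F"
  shows "(\<Sum>i\<in>{i. w i \<noteq> 0}. w i * u i) = (\<Sum>i\<in>F. w i * u i)"
proof (rule sum.mono_neutral_right[symmetric])
  show "finite F" by (rule assms(1))
  show "{i. w i \<noteq> 0} \<subseteq> F" by (rule assms(2))
  show "\<forall>i\<in>F - {i. w i \<noteq> 0}. w i * u i = 0" by simp
qed

lemma iii_imp_sel:
  fixes Y :: "('a \<Rightarrow> real) set"
  assumes inf: "infinite (UNIV::'a set)" and Y1: "c00 \<subseteq> Y" and Y2: "Y \<subseteq> ell1"
  and PU: "\<forall>U :: 'a \<Rightarrow> 'x::topological_space set. (\<forall>a. open (U a)) \<and> (\<Union>a. U a) = UNIV \<longrightarrow>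
                   (\<exists>\<xi>. partition_of_unity \<xi> \<and> index_subordinated \<xi> U)"
  shows "has_cont_eps_selections Y TYPE('x)"
  unfolding has_cont_eps_selections_def
proof (intro allI impI)
  fix \<Phi> :: "'x \<Rightarrow> ('a \<Rightarrow> real) set" and \<epsilon> :: real
  assume \<Phi>: "convex_lsc_mapping \<Phi> Y" and \<epsilon>: "\<epsilon> > 0"
  have \<Phi>ne: "\<Phi> x \<noteq> {}" and \<Phi>Y: "\<Phi> x \<subseteq> Y" and \<Phi>cv: "convex_fun_set (\<Phi> x)" for x
    using \<Phi> unfolding convex_lsc_mapping_def by auto
  have lsc: "openin (l1top Y) V \<Longrightarrow> open {x. \<Phi> x \<inter> V \<noteq> {}}" for V
    using \<Phi> unfolding convex_lsc_mapping_def by auto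
  interpret M: Metric_space Y l1dist by (rule metric_l1[OF Y2])
  obtain g :: "'a \<Rightarrow> ('a \<times> rat) list" where g: "surj g" using surj_lists[OF inf] by blast
  define d where "d \<alpha> = lf (g \<alpha>)" for \<alpha>
  have dc00: "d \<alpha> \<in> c00" for \<alpha> unfolding d_def by (rule lf_c00)
  have dY: "d \<alpha> \<in> Y" for \<alpha> using dc00 Y1 by blast
  have dl1: "d \<alpha> \<in> ell1" for \<alpha> using dY Y2 by blast
  have dense: "\<exists>\<alpha>. l1dist (d \<alpha>) y < r" if yr: "y \<in> ell1" "r > 0" for y r
  proof -
    obtain l where l: "l1dist (lf l) y < r" using lf_dense[OF yr] by blast
    obtain \<alpha> where "l = g \<alpha>" using surjD[OF g] by blast
    then show ?thesis using l unfolding d_def by blast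
  qed
  define U where "U \<alpha> = {x. \<Phi> x \<inter> M.mball (d \<alpha>) \<epsilon> \<noteq> {}}" for \<alpha>
  have Uopen: "open (U \<alpha>)" for \<alpha>
  proof -
    have "openin (l1top Y) (M.mball (d \<alpha>) \<epsilon>)" unfolding l1top_def by (rule M.openin_mball)
    then show ?thesis unfolding U_def by (rule lsc)
  qed
  have Ucover: "(\<Union>\<alpha>. U \<alpha>) = UNIV"
  proof (rule set_eqI)
    fix x
    obtain y where y: "y \<in> \<Phi> x" using \<Phi>ne[of x] by blast
    then have yY: "y \<in> Y" using \<Phi>Y by blast
    then obtain \<alpha> where "l1dist (d \<alpha>) y < \<epsilon>" using dense[of y \<epsilon>] Y2 \<epsilon> by blast
    then have "y \<in> M.mball (d \<alpha>) \<epsilon>" using yY dY by simp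
    then have "x \<in> U \<alpha>" unfolding U_def using y by blast
    then show "x \<in> (\<Union>\<alpha>. U \<alpha>) \<longleftrightarrow> x \<in> UNIV" by blast
  qed
  obtain \<xi> where \<xi>: "partition_of_unity \<xi>" "index_subordinated \<xi> U"
    using PU Uopen Ucover by blast
  obtain \<phi> :: "'a \<Rightarrow> 'x \<Rightarrow> real" where
    \<phi>c: "\<And>a. continuous_on UNIV (\<phi> a)" and \<phi>nn: "\<And>a x. 0 \<le> \<phi> a x"
    and \<phi>\<xi>: "\<And>a x. \<phi> a x \<noteq> 0 \<Longrightarrow> \<xi> a x \<noteq> 0"
    and \<phi>lf: "\<And>x0. \<exists>W F. open W \<and> x0 \<in> W \<and> finite F \<and> (\<forall>x\<in>W. \<forall>a. a \<notin> F \<longrightarrow> \<phi> a x = 0)"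
    and \<phi>fin: "\<And>x. finite {a. \<phi> a x \<noteq> 0}" and \<phi>sum: "\<And>x. sum (\<lambda>a. \<phi> a x) {a. \<phi> a x \<noteq> 0} = 1"
    using LF[OF \<xi>(1)] by blast
  have \<phi>U: "\<exists>y\<in>\<Phi> x. l1dist (d \<alpha>) y < \<epsilon>" if "\<phi> \<alpha> x \<noteq> 0" for \<alpha> x
  proof -
    have "\<xi> \<alpha> x \<noteq> 0" using \<phi>\<xi> that by blast
    then have "x \<in> U \<alpha>" using \<xi>(2) unfolding index_subordinated_def by blast
    then show ?thesis unfolding U_def by auto
  qed
  define S where "S x = {\<alpha>. \<phi> \<alpha> x \<noteq> 0}" for x
  define f where "f x = (\<lambda>b. \<Sum>\<alpha>\<in>S x. \<phi> \<alpha> x * d \<alpha> b)" for x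
  have fc00: "f x \<in> c00" for x
    unfolding f_def using c00_sum[of "S x" d "\<lambda>\<alpha>. \<phi> \<alpha> x"] \<phi>fin dc00 S_def by simp
  have fY: "f x \<in> Y" for x using fc00 Y1 by blast
  have sel: "is_eps_selection \<epsilon> \<Phi> f"
    unfolding is_eps_selection_def
  proof
    fix x
    have "\<forall>\<alpha>\<in>S x. \<exists>y. y \<in> \<Phi> x \<and> l1dist (d \<alpha>) y < \<epsilon>" using \<phi>U unfolding S_def by blast
    then obtain yy where yy: "\<And>\<alpha>. \<alpha> \<in> S x \<Longrightarrow> yy \<alpha> \<in> \<Phi> x \<and> l1dist (d \<alpha>) (yy \<alpha>) < \<epsilon>"
      by (rule bchoice[THEN exE]) blast
    have Sfin: "finite (S x)" unfolding S_def by (rule \<phi>fin)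
    have Ssum: "sum (\<lambda>a. \<phi> a x) (S x) = 1" unfolding S_def by (rule \<phi>sum)
    have Sne: "S x \<noteq> {}" using Ssum by auto
    define z where "z = (\<lambda>b. \<Sum>\<alpha>\<in>S x. \<phi> \<alpha> x * yy \<alpha> b)"
    have zin: "z \<in> \<Phi> x"
      unfolding z_def using convex_comb[OF \<Phi>cv Sfin Sne, of "\<lambda>\<alpha>. \<phi> \<alpha> x" yy] \<phi>nn Ssum yy by blast
    have yyl1: "yy \<alpha> \<in> ell1" if "\<alpha> \<in> S x" for \<alpha> using yy[OF that] \<Phi>Y Y2 by blast
    have diff: "(\<lambda>b. f x b - z b) = (\<lambda>b. \<Sum>\<alpha>\<in>S x. \<phi> \<alpha> x * (\<lambda>b. d \<alpha> b - yy \<alpha> b) b)"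
      unfolding f_def z_def by (simp add: sum_subtractf[symmetric] right_diff_distrib)
    have "l1dist (f x) z \<le> (\<Sum>\<alpha>\<in>S x. \<bar>\<phi> \<alpha> x\<bar> * l1norm (\<lambda>b. d \<alpha> b - yy \<alpha> b))"
      unfolding l1dist_def diff
      by (rule l1norm_sum_scale[OF Sfin]) (intro ell1_minus dl1 yyl1)
    also have "\<dots> = (\<Sum>\<alpha>\<in>S x. \<phi> \<alpha> x * l1dist (d \<alpha>) (yy \<alpha>))"
      using \<phi>nn by (simp add: l1dist_def)
    also have "\<dots> < (\<Sum>\<alpha>\<in>S x. \<phi> \<alpha> x * \<epsilon>)"
    proof (rule sum_strict_mono[OF Sfin Sne])
      fix \<alpha> assume a: "\<alpha> \<in> S x"
      then have "\<phi> \<alpha> x > 0" using \<phi>nn[of \<alpha> x] unfolding S_def by simp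
      then show "\<phi> \<alpha> x * l1dist (d \<alpha>) (yy \<alpha>) < \<phi> \<alpha> x * \<epsilon>" using yy[OF a] by simp
    qed
    also have "\<dots> = \<epsilon>" using Ssum by (simp add: sum_distrib_right[symmetric])
    finally show "\<exists>y\<in>\<Phi> x. l1dist (f x) y < \<epsilon>" using zin by blast
  qed
  have cont: "continuous_map euclidean (l1top Y) f"
  proof (rule cont_to_l1[OF Y2 fY])
    fix x0 and e :: real assume e: "e > 0"
    obtain W F where W: "open W" "x0 \<in> W" "finite F" "\<forall>x\<in>W. \<forall>a. a \<notin> F \<longrightarrow> \<phi> a x = 0"
      using \<phi>lf[of x0] by blast
    define h where "h x = (\<Sum>\<alpha>\<in>F. \<bar>\<phi> \<alpha> x0 - \<phi> \<alpha> x\<bar> * l1norm (d \<alpha>))" for x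
    have hc: "continuous_on UNIV h" unfolding h_def
      by (intro continuous_on_sum continuous_on_mult continuous_on_rabs continuous_on_diff continuous_on_const \<phi>c)
    obtain W' where W': "open W'" "x0 \<in> W'" "\<forall>x\<in>W'. \<bar>h x - h x0\<bar> < e"
      using cont_localD[OF hc e, where p=x0] by blast
    have h0: "h x0 = 0" unfolding h_def by simp
    have floc: "f x = (\<lambda>b. \<Sum>\<alpha>\<in>F. \<phi> \<alpha> x * d \<alpha> b)" if "x \<in> W" for x
    proof
      fix b
      have "S x \<subseteq> F" unfolding S_def using W(4) that by blast
      then show "f x b = (\<Sum>\<alpha>\<in>F. \<phi> \<alpha> x * d \<alpha> b)"
        unfolding f_def S_def using sum_loc[OF W(3), of "\<lambda>\<alpha>. \<phi> \<alpha> x" "\<lambda>\<alpha>. d \<alpha> b"] by simp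
    qed
    have "l1dist (f x0) (f x) < e" if "x \<in> W \<inter> W'" for x
    proof -
      have "(\<lambda>b. f x0 b - f x b) = (\<lambda>b. \<Sum>\<alpha>\<in>F. (\<phi> \<alpha> x0 - \<phi> \<alpha> x) * d \<alpha> b)"
        using floc[of x0] floc[of x] that W(2)
        by (simp add: sum_subtractf[symmetric] left_diff_distrib)
      then have "l1dist (f x0) (f x) = l1norm (\<lambda>b. \<Sum>\<alpha>\<in>F. (\<phi> \<alpha> x0 - \<phi> \<alpha> x) * d \<alpha> b)"
        unfolding l1dist_def by simp
      also have "\<dots> \<le> h x" unfolding h_def by (rule l1norm_sum_scale[OF W(3) dl1])
      also have "h x < e" using W' that h0 by auto
      finally show ?thesis .
    qed
    then show "\<exists>W. open W \<and> x0 \<in> W \<and> (\<forall>x\<in>W. l1dist (f x0) (f x) < e)"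
      using W W' by (intro exI[of _ "W \<inter> W'"]) auto
  qed
  show "\<exists>f. continuous_map euclidean (l1top Y) f \<and> is_eps_selection \<epsilon> \<Phi> f"
    using cont sel by blast
qed

lemma has_sum_fin_supp:
  fixes w :: "'a \<Rightarrow> real"
  assumes "finite F" "\<And>a. a \<notin> F \<Longrightarrow> w a = 0"
  shows "(w has_sum (sum w F)) UNIV"
proof -
  have "(w has_sum (sum w F)) UNIV \<longleftrightarrow> (w has_sum (sum w F)) F"
    by (rule has_sum_cong_neutral) (use assms(2) in auto)
  then show ?thesis using has_sum_finite[OF assms(1)] by simp
qed

lemma has_sum_one_crit:
  fixes w :: "'a \<Rightarrow> real"
  assumes nn: "\<And>a. 0 \<le> w a" and le: "\<And>G. finite G \<Longrightarrow> sum w G \<le> 1"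
    and ge: "\<And>\<delta>. \<delta> > 0 \<Longrightarrow> \<exists>G. finite G \<and> sum w G > 1 - \<delta>"
  shows "(w has_sum 1) UNIV"
proof -
  have bdd: "bdd_above (sum w ` {F. F \<subseteq> UNIV \<and> finite F})"
    by (rule bdd_aboveI[of _ 1]) (auto intro: le)
  have hs: "(w has_sum (SUP F\<in>{F. finite F \<and> F \<subseteq> UNIV}. sum w F)) UNIV"
    by (rule nonneg_bdd_above_has_sum) (use nn bdd in auto)
  define S where "S = (SUP F\<in>{F. finite F \<and> F \<subseteq> UNIV}. sum w F)"
  have bdd2: "bdd_above (sum w ` {F. finite F \<and> F \<subseteq> UNIV})"
    by (rule bdd_aboveI[of _ 1]) (auto intro: le)
  have S1: "S \<le> 1" unfolding S_def
    by (rule cSUP_least) (auto intro: le)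
  have S2: "1 - \<delta> < S" if dp: "\<delta> > 0" for \<delta>
  proof -
    obtain G where G: "finite G" "sum w G > 1 - \<delta>" using ge[OF dp] by blast
    have "sum w G \<le> S" unfolding S_def by (rule cSUP_upper[OF _ bdd2]) (use G in auto)
    then show ?thesis using G by simp
  qed
  have "S = 1"
  proof (rule antisym[OF S1])
    show "1 \<le> S"
    proof (rule field_le_epsilon)
      fix \<delta> :: real assume "\<delta> > 0"
      then show "1 \<le> S + \<delta>" using S2[of \<delta>] by simp
    qed
  qed
  then show ?thesis using hs unfolding S_def by simp
qed

lemma l1norm_prob:
  assumes nn: "\<And>a. 0 \<le> y a" and hs: "((\<lambda>a. y a) has_sum 1) UNIV"
  shows "l1norm y = 1" "y \<in> ell1"
proof -
  have "((\<lambda>a. \<bar>y a\<bar>) has_sum 1) UNIV" using hs nn by simp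
  then show "l1norm y = 1" "y \<in> ell1" unfolding l1norm_def ell1_def
    by (auto simp: has_sum_iff)
qed

lemma approx_fin:
  assumes nn: "\<And>a. 0 \<le> y a" and hs: "((\<lambda>a. y a) has_sum 1) UNIV" and r: "r > 0"
  shows "\<exists>z. z \<in> c00 \<and> (\<forall>a. 0 \<le> z a) \<and> (\<forall>a. z a \<noteq> 0 \<longrightarrow> y a \<noteq> 0) \<and>
             ((\<lambda>a. z a) has_sum 1) UNIV \<and> l1dist y z < r"
proof -
  define \<delta> where "\<delta> = min (r/4) (1/2)"
  have \<delta>: "\<delta> > 0" "\<delta> \<le> r/4" "\<delta> \<le> 1/2" unfolding \<delta>_def using r by auto
  obtain F where F: "finite F" "dist (sum y F) 1 \<le> \<delta>"
    using has_sum_finite_approximation[OF hs \<delta>(1)] by blast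
  define s where "s = sum y F"
  have s1: "s \<le> 1" unfolding s_def by (rule finite_sum_le_has_sum[OF hs F(1)]) (auto intro: nn)
  have s2: "1 - s \<le> \<delta>" using F(2) abs_le_D2[of "sum y F - 1" \<delta>] unfolding s_def dist_real_def by linarith
  have spos: "s > 0" using s2 \<delta> by simp
  define z where "z a = (if a \<in> F then y a / s else 0)" for a
  have zF: "z a = 0" if "a \<notin> F" for a using that unfolding z_def by simp
  have zc00: "z \<in> c00"
  proof -
    have "{a. z a \<noteq> 0} \<subseteq> F" using zF by blast
    then have "finite {a. z a \<noteq> 0}" using F(1) by (rule finite_subset)
    then show ?thesis unfolding c00_def by simp
  qed
  have znn: "0 \<le> z a" for a unfolding z_def using nn[of a] spos by simp
  have zsupp: "z a \<noteq> 0 \<longrightarrow> y a \<noteq> 0" for a unfolding z_def by simp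
  have zsum: "sum z F = 1"
  proof -
    have "sum z F = sum (\<lambda>a. y a / s) F" unfolding z_def by (rule sum.cong) auto
    also have "\<dots> = s / s" by (simp add: sum_divide_distrib[symmetric] s_def)
    finally show ?thesis using spos by simp
  qed
  have zhs: "((\<lambda>a. z a) has_sum 1) UNIV" using has_sum_fin_supp[where w=z and F=F, OF F(1) zF] zsum by simp
  have yl1: "y \<in> ell1" and yn: "l1norm y = 1" using l1norm_prob[OF nn hs] by auto
  have "l1dist y z = l1norm (\<lambda>b. z b - y b)" using l1dist_commute unfolding l1dist_def by metis
  also have "\<dots> \<le> (\<Sum>a\<in>F. \<bar>z a - y a\<bar>) + (l1norm y - (\<Sum>a\<in>F. \<bar>y a\<bar>))"
    by (rule l1_tail_bound[OF yl1 F(1) zF])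
  also have "(\<Sum>a\<in>F. \<bar>z a - y a\<bar>) = (\<Sum>a\<in>F. y a * (1/s - 1))"
  proof (rule sum.cong)
    fix a assume "a \<in> F"
    then have "z a - y a = y a * (1/s - 1)" unfolding z_def by (simp add: field_simps)
    moreover have "1/s - 1 \<ge> 0" using s1 spos by (simp add: field_simps)
    then have "y a * (1/s - 1) \<ge> 0" using nn[of a] by simp
    ultimately show "\<bar>z a - y a\<bar> = y a * (1/s - 1)" by simp
  qed simp
  also have "\<dots> = s * (1/s - 1)" unfolding s_def by (simp add: sum_distrib_right)
  also have "\<dots> = 1 - s" using spos by (simp add: field_simps)
  also have "(\<Sum>a\<in>F. \<bar>y a\<bar>) = s" unfolding s_def using nn by simp
  finally have "l1dist y z \<le> 2 * (1 - s)" using yn by simp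
  moreover have "2 * (1 - s) \<le> 2 * \<delta>" using s2 by simp
  moreover have "2 * \<delta> < r" using \<delta>(2) r by simp
  ultimately have "l1dist y z < r" by linarith
  then show ?thesis using zc00 znn zsupp zhs by blast
qed

lemma step_lsc:
  fixes \<Phi> :: "'x::topological_space \<Rightarrow> ('a \<Rightarrow> real) set"
  assumes Y2: "Y \<subseteq> ell1" and \<Phi>: "convex_lsc_mapping \<Phi> Y"
    and fc: "continuous_map euclidean (l1top Y) f" and fs: "is_eps_selection \<epsilon> \<Phi> f"
  shows "convex_lsc_mapping (\<lambda>x. {y \<in> \<Phi> x. l1dist (f x) y < \<epsilon>}) Y"
proof -
  interpret M: Metric_space Y l1dist by (rule metric_l1[OF Y2])
  have \<Phi>Y: "\<Phi> x \<subseteq> Y" and \<Phi>cv: "convex_fun_set (\<Phi> x)" for x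
    using \<Phi> unfolding convex_lsc_mapping_def by auto
  have lsc: "openin (l1top Y) V \<Longrightarrow> open {x. \<Phi> x \<inter> V \<noteq> {}}" for V
    using \<Phi> unfolding convex_lsc_mapping_def by auto
  have fY: "f x \<in> Y" for x by (rule cont_from_l1(1)[OF Y2 fc])
  have ne: "{y \<in> \<Phi> x. l1dist (f x) y < \<epsilon>} \<noteq> {}" for x
    using fs unfolding is_eps_selection_def by blast
  have cv: "convex_fun_set {y \<in> \<Phi> x. l1dist (f x) y < \<epsilon>}" for x
    unfolding convex_fun_set_def
  proof (intro ballI allI impI)
    fix y z and t :: real
    assume y: "y \<in> {y \<in> \<Phi> x. l1dist (f x) y < \<epsilon>}" and z: "z \<in> {y \<in> \<Phi> x. l1dist (f x) y < \<epsilon>}"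
      and t: "0 \<le> t \<and> t \<le> 1"
    have w: "(\<lambda>a. t * y a + (1 - t) * z a) \<in> \<Phi> x"
      using convex_funD[OF \<Phi>cv] y z t by blast
    have yl: "y \<in> ell1" and zl: "z \<in> ell1" and fl: "f x \<in> ell1" using y z \<Phi>Y Y2 fY by blast+
    have u1: "(\<lambda>a. f x a - y a) \<in> ell1" and u2: "(\<lambda>a. f x a - z a) \<in> ell1" using ell1_minus fl yl zl by blast+
    have "l1dist (f x) (\<lambda>a. t * y a + (1 - t) * z a) =
          l1norm (\<lambda>a. t * (f x a - y a) + (1 - t) * (f x a - z a))"
      unfolding l1dist_def by (simp add: algebra_simps)
    also have "\<dots> \<le> l1norm (\<lambda>a. t * (f x a - y a)) + l1norm (\<lambda>a. (1 - t) * (f x a - z a))"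
      by (rule ell1_add(2)) (intro ell1_scale u1 u2)+
    also have "\<dots> = t * l1dist (f x) y + (1 - t) * l1dist (f x) z"
      using ell1_scale(2)[OF u1, of t] ell1_scale(2)[OF u2, of "1 - t"] t unfolding l1dist_def by simp
    also have "\<dots> \<le> t * max (l1dist (f x) y) (l1dist (f x) z) + (1 - t) * max (l1dist (f x) y) (l1dist (f x) z)"
      using t by (intro add_mono mult_left_mono) auto
    also have "\<dots> = max (l1dist (f x) y) (l1dist (f x) z)" by (simp add: algebra_simps)
    also have "\<dots> < \<epsilon>" using y z by simp
    finally show "(\<lambda>a. t * y a + (1 - t) * z a) \<in> {y \<in> \<Phi> x. l1dist (f x) y < \<epsilon>}" using w by blast
  qed
  have op: "open {x. {y \<in> \<Phi> x. l1dist (f x) y < \<epsilon>} \<inter> V \<noteq> {}}" if V: "openin (l1top Y) V" for V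
  proof (subst open_subopen, intro ballI)
    fix x0 assume "x0 \<in> {x. {y \<in> \<Phi> x. l1dist (f x) y < \<epsilon>} \<inter> V \<noteq> {}}"
    then obtain y where y: "y \<in> \<Phi> x0" "l1dist (f x0) y < \<epsilon>" "y \<in> V" by blast
    have yY: "y \<in> Y" using y \<Phi>Y by blast
    define \<delta> where "\<delta> = \<epsilon> - l1dist (f x0) y"
    have \<delta>: "\<delta> > 0" using y unfolding \<delta>_def by simp
    obtain r where r: "r > 0" "M.mball y r \<subseteq> V"
      using V y(3) unfolding l1top_def M.openin_mtopology by blast
    define \<rho> where "\<rho> = min r (\<delta>/2)"
    have \<rho>: "\<rho> > 0" "\<rho> \<le> r" "\<rho> \<le> \<delta>/2" unfolding \<rho>_def using r \<delta> by auto
    have "openin (l1top Y) (M.mball y \<rho>)" unfolding l1top_def by (rule M.openin_mball)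
    then have O1: "open {x. \<Phi> x \<inter> M.mball y \<rho> \<noteq> {}}" by (rule lsc)
    have x0O1: "x0 \<in> {x. \<Phi> x \<inter> M.mball y \<rho> \<noteq> {}}" using y(1) yY \<rho> by auto
    obtain W where W: "open W" "x0 \<in> W" "\<forall>x\<in>W. l1dist (f x0) (f x) < \<delta>/2"
      using cont_from_l1(2)[OF Y2 fc, of "\<delta>/2" x0] \<delta> by auto
    have sub: "{x. \<Phi> x \<inter> M.mball y \<rho> \<noteq> {}} \<inter> W \<subseteq> {x. {y \<in> \<Phi> x. l1dist (f x) y < \<epsilon>} \<inter> V \<noteq> {}}"
    proof
      fix x assume x: "x \<in> {x. \<Phi> x \<inter> M.mball y \<rho> \<noteq> {}} \<inter> W"
      then obtain z where z: "z \<in> \<Phi> x" "z \<in> M.mball y \<rho>" by blast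
      have zY: "z \<in> Y" and dyz: "l1dist y z < \<rho>" using z(2) by auto
      have "l1dist (f x) z \<le> l1dist (f x) (f x0) + l1dist (f x0) z"
        using M.triangle[OF fY fY zY] .
      also have "l1dist (f x0) z \<le> l1dist (f x0) y + l1dist y z"
        using M.triangle[OF fY yY zY] .
      finally have "l1dist (f x) z < \<epsilon>"
        using W(3) x dyz \<rho> l1dist_commute[of "f x" "f x0"] unfolding \<delta>_def by auto
      moreover have "z \<in> V" using z(2) r(2) \<rho>(2) M.mball_subset_concentric by blast
      ultimately show "x \<in> {x. {y \<in> \<Phi> x. l1dist (f x) y < \<epsilon>} \<inter> V \<noteq> {}}" using z(1) by blast
    qed
    show "\<exists>T. open T \<and> x0 \<in> T \<and> T \<subseteq> {x. {y \<in> \<Phi> x. l1dist (f x) y < \<epsilon>} \<inter> V \<noteq> {}}"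
      using O1 W x0O1 sub by (intro exI[of _ "{x. \<Phi> x \<inter> M.mball y \<rho> \<noteq> {}} \<inter> W"]) auto
  qed
  show ?thesis unfolding convex_lsc_mapping_def using ne \<Phi>Y cv op by blast
qed

lemma le_zero_if_eps:
  fixes v c :: real
  assumes "\<And>n. v \<le> c * (1/2)^n" "c > 0"
  shows "v \<le> 0"
proof (rule ccontr)
  assume "\<not> v \<le> 0"
  then have "v / c > 0" using assms(2) by simp
  then obtain n where n: "(1/2::real)^n < v / c" using real_arch_pow_inv[of "v/c" "1/2"] by auto
  then have "c * (1/2)^n < v" using assms(2) by (simp add: field_simps)
  then show False using assms(1)[of n] by simp
qed

lemma exists_small_pow:
  fixes \<eta> :: real assumes "\<eta> > 0" and that: "c > 0" shows "\<exists>n. c * (1/2::real)^n < \<eta>"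
proof -
  have "\<eta> / c > 0" using assms by simp
  then obtain n where "(1/2::real)^n < \<eta> / c" using real_arch_pow_inv[of "\<eta>/c" "1/2"] by auto
  then show ?thesis using that by (intro exI[of _ n]) (simp add: field_simps)
qed

lemma sel_imp_iii:
  fixes Y :: "('a \<Rightarrow> real) set"
  assumes Y1: "c00 \<subseteq> Y" and Y2: "Y \<subseteq> ell1" and Y3: "convex_fun_set Y"
    and H: "has_cont_eps_selections Y TYPE('x::topological_space)"
  shows "\<forall>U :: 'a \<Rightarrow> 'x set. (\<forall>a. open (U a)) \<and> (\<Union>a. U a) = UNIV \<longrightarrow>
                   (\<exists>\<xi>. partition_of_unity \<xi> \<and> index_subordinated \<xi> U)"
proof (intro allI impI)
  fix U :: "'a \<Rightarrow> 'x set" assume UU: "(\<forall>a. open (U a)) \<and> (\<Union>a. U a) = UNIV"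
  have Uo: "\<And>a. open (U a)" using UU by blast
  have Uc: "\<exists>a. x \<in> U a" for x
  proof -
    have "x \<in> (\<Union>a. U a)" using UU by simp
    then show ?thesis by blast
  qed
  have Hs: "\<exists>f. continuous_map euclidean (l1top Y) f \<and> is_eps_selection \<epsilon> \<Phi> f"
    if "convex_lsc_mapping \<Phi> Y" "\<epsilon> > 0" for \<Phi> :: "'x \<Rightarrow> ('a \<Rightarrow> real) set" and \<epsilon>
    using H that unfolding has_cont_eps_selections_def by blast
  interpret M: Metric_space Y l1dist by (rule metric_l1[OF Y2])
  define \<Psi> where "\<Psi> x = {y \<in> Y. (\<forall>a. 0 \<le> y a) \<and> (\<forall>a. x \<notin> U a \<longrightarrow> y a = 0) \<and> ((\<lambda>a. y a) has_sum 1) UNIV}" for x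
  have \<Psi>ne: "\<Psi> x \<noteq> {}" for x
  proof -
    obtain a0 where a0: "x \<in> U a0" using Uc by blast
    define u where "u b = (if b = a0 then 1 else (0::real))" for b
    have u0: "u b = 0" if "b \<notin> {a0}" for b using that unfolding u_def by simp
    have "{b. u b \<noteq> 0} = {a0}" unfolding u_def by auto
    then have "u \<in> c00" unfolding c00_def by simp
    then have "u \<in> Y" using Y1 by blast
    moreover have "((\<lambda>a. u a) has_sum 1) UNIV"
    proof -
      have "sum u {a0} = 1" by (simp add: u_def)
      then show ?thesis using has_sum_fin_supp[where w=u and F="{a0}", OF _ u0] by simp
    qed
    moreover have "\<forall>a. 0 \<le> u a" "\<forall>a. x \<notin> U a \<longrightarrow> u a = 0" using a0 unfolding u_def by auto
    ultimately have "u \<in> \<Psi> x" unfolding \<Psi>_def by blast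
    then show ?thesis by blast
  qed
  have \<Psi>Y: "\<Psi> x \<subseteq> Y" for x unfolding \<Psi>_def by blast
  have \<Psi>cv: "convex_fun_set (\<Psi> x)" for x
    unfolding convex_fun_set_def
  proof (intro ballI allI impI)
    fix y z and t :: real assume y: "y \<in> \<Psi> x" and z: "z \<in> \<Psi> x" and t: "0 \<le> t \<and> t \<le> 1"
    have "(\<lambda>a. t * y a + (1 - t) * z a) \<in> Y" using convex_funD[OF Y3] y z t \<Psi>Y by blast
    moreover have "\<forall>a. 0 \<le> t * y a + (1 - t) * z a" using y z t unfolding \<Psi>_def by auto
    moreover have "\<forall>a. x \<notin> U a \<longrightarrow> t * y a + (1 - t) * z a = 0" using y z unfolding \<Psi>_def by auto
    moreover have "((\<lambda>a. t * y a + (1 - t) * z a) has_sum 1) UNIV"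
    proof -
      have hy: "((\<lambda>a. y a) has_sum 1) UNIV" and hz: "((\<lambda>a. z a) has_sum 1) UNIV"
        using y z unfolding \<Psi>_def by auto
      have "((\<lambda>a. t * y a + (1 - t) * z a) has_sum (t * 1 + (1 - t) * 1)) UNIV"
        by (intro has_sum_add has_sum_cmult_right hy hz)
      then show ?thesis by simp
    qed
    ultimately show "(\<lambda>a. t * y a + (1 - t) * z a) \<in> \<Psi> x" unfolding \<Psi>_def by blast
  qed
  have \<Psi>lsc: "open {x. \<Psi> x \<inter> V \<noteq> {}}" if V: "openin (l1top Y) V" for V
  proof (subst open_subopen, intro ballI)
    fix x0 assume "x0 \<in> {x. \<Psi> x \<inter> V \<noteq> {}}"
    then obtain y where y: "y \<in> \<Psi> x0" "y \<in> V" by blast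
    have yY: "y \<in> Y" and ynn: "\<And>a. 0 \<le> y a" and y0: "\<And>a. x0 \<notin> U a \<Longrightarrow> y a = 0"
      and yhs: "((\<lambda>a. y a) has_sum 1) UNIV" using y(1) unfolding \<Psi>_def by auto
    obtain r where r: "r > 0" "M.mball y r \<subseteq> V"
      using V y(2) unfolding l1top_def M.openin_mtopology by blast
    obtain z where z: "z \<in> c00" "\<forall>a. 0 \<le> z a" "\<forall>a. z a \<noteq> 0 \<longrightarrow> y a \<noteq> 0"
      "((\<lambda>a. z a) has_sum 1) UNIV" "l1dist y z < r"
      using approx_fin[OF ynn yhs r(1)] by blast
    define W where "W = (\<Inter>a\<in>{a. z a \<noteq> 0}. U a)"
    have Wo: "open W" unfolding W_def using z(1) Uo by (intro open_INT) (auto simp: c00_def)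
    have x0W: "x0 \<in> W" unfolding W_def using z(3) y0 by blast
    have zY: "z \<in> Y" using z(1) Y1 by blast
    have "W \<subseteq> {x. \<Psi> x \<inter> V \<noteq> {}}"
    proof
      fix x assume x: "x \<in> W"
      have "\<forall>a. x \<notin> U a \<longrightarrow> z a = 0" using x unfolding W_def by blast
      then have "z \<in> \<Psi> x" unfolding \<Psi>_def using zY z by blast
      moreover have "z \<in> V" using r(2) zY yY z(5) by auto
      ultimately show "x \<in> {x. \<Psi> x \<inter> V \<noteq> {}}" by blast
    qed
    then show "\<exists>T. open T \<and> x0 \<in> T \<and> T \<subseteq> {x. \<Psi> x \<inter> V \<noteq> {}}" using Wo x0W by blast
  qed
  have \<Psi>cl: "convex_lsc_mapping \<Psi> Y"
    unfolding convex_lsc_mapping_def using \<Psi>ne \<Psi>Y \<Psi>cv \<Psi>lsc by blast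
  define e where "e n = (1/2::real)^n" for n
  have epos: "e n > 0" for n unfolding e_def by simp
  have eSuc: "e (Suc n) = e n / 2" for n unfolding e_def by simp
  define P where "P n p = (convex_lsc_mapping (fst p) Y \<and> (\<forall>x. fst p x \<subseteq> \<Psi> x) \<and>
     continuous_map euclidean (l1top Y) (snd p) \<and> is_eps_selection (e n) (fst p) (snd p))"
    for n and p :: "('x \<Rightarrow> ('a \<Rightarrow> real) set) \<times> ('x \<Rightarrow> 'a \<Rightarrow> real)"
  define Q where "Q n p p' = (\<forall>x. fst p' x \<subseteq> {y \<in> fst p x. l1dist (snd p x) y < e n})"
    for n and p p' :: "('x \<Rightarrow> ('a \<Rightarrow> real) set) \<times> ('x \<Rightarrow> 'a \<Rightarrow> real)"
  have P0: "\<exists>p. P 0 p"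
  proof -
    obtain f0 where f0: "continuous_map euclidean (l1top Y) f0" "is_eps_selection (e 0) \<Psi> f0"
      using Hs[OF \<Psi>cl epos] by blast
    then have "P 0 (\<Psi>, f0)" unfolding P_def using \<Psi>cl by simp
    then show ?thesis by blast
  qed
  have PS: "\<exists>p'. P (Suc n) p' \<and> Q n p p'" if Pp: "P n p" for n p
  proof -
    define \<Phi>' where "\<Phi>' x = {y \<in> fst p x. l1dist (snd p x) y < e n}" for x
    have cl: "convex_lsc_mapping \<Phi>' Y" unfolding \<Phi>'_def
      using step_lsc[OF Y2] Pp unfolding P_def by blast
    obtain f' where f': "continuous_map euclidean (l1top Y) f'" "is_eps_selection (e (Suc n)) \<Phi>' f'"
      using Hs[OF cl epos] by blast
    have "\<forall>x. \<Phi>' x \<subseteq> \<Psi> x" using Pp unfolding P_def \<Phi>'_def by blast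
    then have "P (Suc n) (\<Phi>', f')" unfolding P_def using cl f' by simp
    moreover have "Q n p (\<Phi>', f')" unfolding Q_def \<Phi>'_def by simp
    ultimately show ?thesis by blast
  qed
  obtain seq where seq: "\<forall>n. P n (seq n) \<and> Q n (seq n) (seq (Suc n))"
    using dependent_nat_choice[of P Q, OF P0 PS] by blast
  define fs where "fs n = snd (seq n)" for n
  have fsc: "continuous_map euclidean (l1top Y) (fs n)" for n using seq unfolding P_def fs_def by blast
  have fsY: "fs n x \<in> Y" for n x by (rule cont_from_l1(1)[OF Y2 fsc])
  have fsl: "fs n x \<in> ell1" for n x using fsY Y2 by blast
  have near: "\<exists>y\<in>\<Psi> x. l1dist (fs n x) y < e n" for n x
  proof -
    have "is_eps_selection (e n) (fst (seq n)) (fs n)" "fst (seq n) x \<subseteq> \<Psi> x"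
      using seq unfolding P_def fs_def by blast+
    then show ?thesis unfolding is_eps_selection_def by blast
  qed
  have stepd: "l1dist (fs n x) (fs (Suc n) x) \<le> 2 * e n" for n x
  proof -
    have "is_eps_selection (e (Suc n)) (fst (seq (Suc n))) (fs (Suc n))" using seq unfolding P_def fs_def by blast
    then obtain y where y: "y \<in> fst (seq (Suc n)) x" "l1dist (fs (Suc n) x) y < e (Suc n)"
      unfolding is_eps_selection_def by blast
    have "fst (seq (Suc n)) x \<subseteq> {y \<in> fst (seq n) x. l1dist (fs n x) y < e n}"
      using seq unfolding Q_def fs_def by blast
    then have y2: "y \<in> fst (seq n) x" "l1dist (fs n x) y < e n" using y(1) by auto
    have yY: "y \<in> Y" using y2(1) seq unfolding P_def convex_lsc_mapping_def by blast
    have "l1dist (fs n x) (fs (Suc n) x) \<le> l1dist (fs n x) y + l1dist y (fs (Suc n) x)"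
      by (rule M.triangle[OF fsY yY fsY])
    also have "\<dots> < e n + e (Suc n)" using y(2) y2(2) l1dist_commute[of y "fs (Suc n) x"] by simp
    also have "\<dots> \<le> 2 * e n" using eSuc[of n] epos[of n] by simp
    finally show ?thesis by simp
  qed
  have tele: "l1dist (fs n x) (fs (n + j) x) \<le> 4 * e n - 4 * e (n + j)" for n j x
  proof (induction j)
    case 0
    have "l1dist (fs n x) (fs n x) = 0" using M.zero[OF fsY fsY] by simp
    then show ?case by simp
  next
    case (Suc j)
    have "l1dist (fs n x) (fs (n + Suc j) x) \<le> l1dist (fs n x) (fs (n + j) x) + l1dist (fs (n + j) x) (fs (Suc (n + j)) x)"
      using M.triangle[OF fsY fsY fsY] by simp
    also have "\<dots> \<le> 4 * e n - 4 * e (n + j) + 2 * e (n + j)" using Suc stepd[of "n + j" x] by simp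
    also have "\<dots> = 4 * e n - 4 * e (n + Suc j)" using eSuc[of "n + j"] by simp
    finally show ?case .
  qed
  have tele2: "l1dist (fs n x) (fs m x) \<le> 4 * e n" if "n \<le> m" for n m x
  proof -
    have "m = n + (m - n)" using that by simp
    then have "l1dist (fs n x) (fs m x) \<le> 4 * e n - 4 * e m" using tele[of n x "m - n"] by metis
    then show ?thesis using epos[of m] by simp
  qed
  have coord: "\<bar>fs n x a - fs m x a\<bar> \<le> 4 * e n" if "n \<le> m" for n m x a
    using l1dist_coord[OF fsl[of n x] fsl[of m x], of a] tele2[OF that, of x] by simp
  have small: "\<exists>n. c * e n < \<eta>" if "\<eta> > 0" "c > 0" for c \<eta>
    unfolding e_def using exists_small_pow[OF that(1) that(2)] .
  have emono: "e m \<le> e n" if "n \<le> m" for n m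
    unfolding e_def using that by (simp add: power_decreasing)
  have cauchy: "Cauchy (\<lambda>n. fs n x a)" for x a
  proof (rule metric_CauchyI)
    fix \<eta> :: real assume \<eta>: "\<eta> > 0"
    obtain N where N: "8 * e N < \<eta>" using small[OF \<eta>, of 8] by auto
    have "dist (fs m x a) (fs n x a) < \<eta>" if "m \<ge> N" "n \<ge> N" for m n
    proof -
      have "\<bar>fs N x a - fs m x a\<bar> \<le> 4 * e N" "\<bar>fs N x a - fs n x a\<bar> \<le> 4 * e N"
        using coord that by auto
      then show ?thesis using N unfolding dist_real_def by linarith
    qed
    then show "\<exists>M. \<forall>m\<ge>M. \<forall>n\<ge>M. dist (fs m x a) (fs n x a) < \<eta>" by blast
  qed
  define \<xi> where "\<xi> a x = lim (\<lambda>n. fs n x a)" for a x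
  have lim: "(\<lambda>n. fs n x a) \<longlonglongrightarrow> \<xi> a x" for a x
    unfolding \<xi>_def using cauchy[of x a] by (simp add: Cauchy_convergent_iff convergent_LIMSEQ_iff)
  have bndF: "(\<Sum>a\<in>G. \<bar>fs n x a - \<xi> a x\<bar>) \<le> 4 * e n" if G: "finite G" for G n x
  proof (rule LIMSEQ_le_const2)
    show "(\<lambda>m. \<Sum>a\<in>G. \<bar>fs n x a - fs m x a\<bar>) \<longlonglongrightarrow> (\<Sum>a\<in>G. \<bar>fs n x a - \<xi> a x\<bar>)"
      by (intro tendsto_sum tendsto_rabs tendsto_diff tendsto_const lim)
    have "(\<Sum>a\<in>G. \<bar>fs n x a - fs m x a\<bar>) \<le> 4 * e n" if "m \<ge> n" for m
      using l1dist_sum_coord[OF fsl[of n x] fsl[of m x] G] tele2[OF that, of x] by simp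
    then show "\<exists>N. \<forall>m\<ge>N. (\<Sum>a\<in>G. \<bar>fs n x a - fs m x a\<bar>) \<le> 4 * e n" by blast
  qed
  have bnd1: "\<bar>fs n x a - \<xi> a x\<bar> \<le> 4 * e n" for n x a using bndF[of "{a}"] by simp
  have \<xi>cont: "continuous_on UNIV (\<xi> a)" for a
  proof (rule cont_local)
    fix x0 and \<eta> :: real assume \<eta>: "\<eta> > 0"
    obtain n where n: "12 * e n < \<eta>" using small[OF \<eta>, of 12] by auto
    have \<eta>3: "\<eta>/3 > 0" using \<eta> by simp
    obtain W where W: "open W" "x0 \<in> W" "\<forall>x\<in>W. \<bar>fs n x a - fs n x0 a\<bar> < \<eta>/3"
      using cont_localD[OF cont_coord[OF Y2 fsc] \<eta>3, where p=x0] by blast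
    have "\<bar>\<xi> a x - \<xi> a x0\<bar> < \<eta>" if "x \<in> W" for x
    proof -
      have "\<bar>fs n x a - \<xi> a x\<bar> \<le> 4 * e n" "\<bar>fs n x0 a - \<xi> a x0\<bar> \<le> 4 * e n" by (rule bnd1)+
      moreover have "\<bar>fs n x a - fs n x0 a\<bar> < \<eta>/3" using W that by blast
      ultimately show ?thesis using n by linarith
    qed
    then show "\<exists>W. open W \<and> x0 \<in> W \<and> (\<forall>x\<in>W. \<bar>\<xi> a x - \<xi> a x0\<bar> < \<eta>)" using W by blast
  qed
  have coordnear: "\<exists>y\<in>\<Psi> x. \<forall>a. \<bar>fs n x a - y a\<bar> < e n" for n x
  proof -
    obtain y where y: "y \<in> \<Psi> x" "l1dist (fs n x) y < e n" using near by blast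
    have "y \<in> ell1" using y(1) \<Psi>Y Y2 by blast
    then have "\<forall>a. \<bar>fs n x a - y a\<bar> < e n" using l1dist_coord[OF fsl[of n x]] y(2) by (meson le_less_trans)
    then show ?thesis using y(1) by blast
  qed
  have \<xi>nn: "0 \<le> \<xi> a x" for a x
  proof -
    have "- \<xi> a x \<le> 5 * (1/2)^n" for n
    proof -
      obtain y where y: "y \<in> \<Psi> x" "\<forall>a. \<bar>fs n x a - y a\<bar> < e n" using coordnear by blast
      have "0 \<le> y a" using y(1) unfolding \<Psi>_def by blast
      then show ?thesis using y(2) bnd1[of n x a] unfolding e_def by (smt (verit))
    qed
    then have "- \<xi> a x \<le> 0" by (rule le_zero_if_eps) simp
    then show ?thesis by simp
  qed
  have \<xi>out: "\<xi> a x = 0" if "x \<notin> U a" for a x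
  proof -
    have "\<bar>\<xi> a x\<bar> \<le> 5 * (1/2)^n" for n
    proof -
      obtain y where y: "y \<in> \<Psi> x" "\<forall>a. \<bar>fs n x a - y a\<bar> < e n" using coordnear by blast
      have "y a = 0" using y(1) that unfolding \<Psi>_def by blast
      then show ?thesis using y(2) bnd1[of n x a] unfolding e_def by (smt (verit))
    qed
    then have "\<bar>\<xi> a x\<bar> \<le> 0" by (rule le_zero_if_eps) simp
    then show ?thesis by simp
  qed
  have sumle: "sum (\<lambda>a. \<xi> a x) G \<le> 1" if G: "finite G" for G x
  proof -
    have "sum (\<lambda>a. \<xi> a x) G - 1 \<le> 5 * (1/2)^n" for n
    proof -
      obtain y where y: "y \<in> \<Psi> x" "l1dist (fs n x) y < e n" using near by blast
      have yl: "y \<in> ell1" using y(1) \<Psi>Y Y2 by blast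
      have ynn: "\<And>a. 0 \<le> y a" and yhs: "((\<lambda>a. y a) has_sum 1) UNIV" using y(1) unfolding \<Psi>_def by auto
      have s1: "sum y G \<le> 1" by (rule finite_sum_le_has_sum[OF yhs G]) (auto intro: ynn)
      have s2: "(\<Sum>a\<in>G. \<bar>fs n x a - y a\<bar>) < e n" using l1dist_sum_coord[OF fsl[of n x] yl G] y(2) by linarith
      have s3: "(\<Sum>a\<in>G. \<bar>fs n x a - \<xi> a x\<bar>) \<le> 4 * e n" by (rule bndF[OF G])
      have "sum (\<lambda>a. \<xi> a x) G - sum y G \<le> (\<Sum>a\<in>G. \<bar>fs n x a - y a\<bar> + \<bar>fs n x a - \<xi> a x\<bar>)"
        unfolding sum_subtractf[symmetric] by (intro sum_mono) linarith
      also have "\<dots> = (\<Sum>a\<in>G. \<bar>fs n x a - y a\<bar>) + (\<Sum>a\<in>G. \<bar>fs n x a - \<xi> a x\<bar>)" by (rule sum.distrib)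
      finally show ?thesis using s1 s2 s3 unfolding e_def by linarith
    qed
    then have "sum (\<lambda>a. \<xi> a x) G - 1 \<le> 0" by (rule le_zero_if_eps) simp
    then show ?thesis by simp
  qed
  have sumge: "\<exists>G. finite G \<and> sum (\<lambda>a. \<xi> a x) G > 1 - \<delta>" if \<delta>: "\<delta> > 0" for x \<delta>
  proof -
    obtain n where n: "6 * e n < \<delta>" using small[OF \<delta>, of 6] by auto
    obtain y where y: "y \<in> \<Psi> x" "l1dist (fs n x) y < e n" using near by blast
    have yl: "y \<in> ell1" using y(1) \<Psi>Y Y2 by blast
    have yhs: "((\<lambda>a. y a) has_sum 1) UNIV" using y(1) unfolding \<Psi>_def by auto
    obtain G where G: "finite G" "dist (sum y G) 1 \<le> e n"
      using has_sum_finite_approximation[OF yhs epos] by blast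
    have s1: "sum y G \<ge> 1 - e n" using G(2) abs_le_D2[of "sum y G - 1" "e n"] unfolding dist_real_def by linarith
    have s2: "(\<Sum>a\<in>G. \<bar>fs n x a - y a\<bar>) < e n" using l1dist_sum_coord[OF fsl[of n x] yl G(1)] y(2) by linarith
    have s3: "(\<Sum>a\<in>G. \<bar>fs n x a - \<xi> a x\<bar>) \<le> 4 * e n" by (rule bndF[OF G(1)])
    have "sum y G - sum (\<lambda>a. \<xi> a x) G \<le> (\<Sum>a\<in>G. \<bar>fs n x a - y a\<bar> + \<bar>fs n x a - \<xi> a x\<bar>)"
      unfolding sum_subtractf[symmetric] by (intro sum_mono) linarith
    also have "\<dots> = (\<Sum>a\<in>G. \<bar>fs n x a - y a\<bar>) + (\<Sum>a\<in>G. \<bar>fs n x a - \<xi> a x\<bar>)" by (rule sum.distrib)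
    finally have "sum (\<lambda>a. \<xi> a x) G > 1 - \<delta>" using s1 s2 s3 n by linarith
    then show ?thesis using G(1) by blast
  qed
  have \<xi>le1: "\<xi> a x \<le> 1" for a x using sumle[of "{a}" x] by simp
  have \<xi>hs: "((\<lambda>a. \<xi> a x) has_sum 1) UNIV" for x
    by (rule has_sum_one_crit) (use \<xi>nn sumle sumge in auto)
  have "partition_of_unity \<xi>" unfolding partition_of_unity_def using \<xi>cont \<xi>nn \<xi>le1 \<xi>hs by blast
  moreover have "index_subordinated \<xi> U" unfolding index_subordinated_def using \<xi>out by blast
  ultimately show "\<exists>\<xi>. partition_of_unity \<xi> \<and> index_subordinated \<xi> U" by blast
qed

lemma c00_convex: "convex_fun_set c00"
  unfolding convex_fun_set_def
proof (intro ballI allI impI)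
  fix y z :: "'a \<Rightarrow> real" and t :: real
  assume y: "y \<in> c00" and z: "z \<in> c00"
  have "{a. t * y a + (1 - t) * z a \<noteq> 0} \<subseteq> {a. y a \<noteq> 0} \<union> {a. z a \<noteq> 0}" by auto
  moreover have "finite ({a. y a \<noteq> 0} \<union> {a. z a \<noteq> 0})" using y z by (simp add: c00_def)
  ultimately have "finite {a. t * y a + (1 - t) * z a \<noteq> 0}" by (rule finite_subset)
  then show "(\<lambda>a. t * y a + (1 - t) * z a) \<in> c00" by (simp add: c00_def)
qed

lemma ell1_convex: "convex_fun_set ell1"
  unfolding convex_fun_set_def
  by (intro ballI allI impI ell1_add(1) ell1_scale(1))

theorem theorem4p4:
  assumes "infinite (UNIV :: 'a set)"
  shows "(has_cont_eps_selections (c00 :: ('a \<Rightarrow> real) set) TYPE('x::topological_space)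
            \<longleftrightarrow> has_cont_eps_selections (ell1 :: ('a \<Rightarrow> real) set) TYPE('x)) \<and>
         (has_cont_eps_selections (ell1 :: ('a \<Rightarrow> real) set) TYPE('x)
            \<longleftrightarrow> (\<forall>U :: 'a \<Rightarrow> 'x set. (\<forall>a. open (U a)) \<and> (\<Union>a. U a) = UNIV \<longrightarrow>
                   (\<exists>\<xi>. partition_of_unity \<xi> \<and> index_subordinated \<xi> U)))"
proof -
  have c1: "has_cont_eps_selections (c00 :: ('a \<Rightarrow> real) set) TYPE('x) \<longleftrightarrow>
     (\<forall>U :: 'a \<Rightarrow> 'x set. (\<forall>a. open (U a)) \<and> (\<Union>a. U a) = UNIV \<longrightarrow>
                   (\<exists>\<xi>. partition_of_unity \<xi> \<and> index_subordinated \<xi> U))"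
  proof
    assume "has_cont_eps_selections (c00 :: ('a \<Rightarrow> real) set) TYPE('x)"
    then show "\<forall>U :: 'a \<Rightarrow> 'x set. (\<forall>a. open (U a)) \<and> (\<Union>a. U a) = UNIV \<longrightarrow>
                   (\<exists>\<xi>. partition_of_unity \<xi> \<and> index_subordinated \<xi> U)"
      by (rule sel_imp_iii[OF subset_refl c00_sub_ell1 c00_convex])
  next
    assume "\<forall>U :: 'a \<Rightarrow> 'x set. (\<forall>a. open (U a)) \<and> (\<Union>a. U a) = UNIV \<longrightarrow>
                   (\<exists>\<xi>. partition_of_unity \<xi> \<and> index_subordinated \<xi> U)"
    then show "has_cont_eps_selections (c00 :: ('a \<Rightarrow> real) set) TYPE('x)"
      by (rule iii_imp_sel[OF assms subset_refl c00_sub_ell1])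
  qed
  have c2: "has_cont_eps_selections (ell1 :: ('a \<Rightarrow> real) set) TYPE('x) \<longleftrightarrow>
     (\<forall>U :: 'a \<Rightarrow> 'x set. (\<forall>a. open (U a)) \<and> (\<Union>a. U a) = UNIV \<longrightarrow>
                   (\<exists>\<xi>. partition_of_unity \<xi> \<and> index_subordinated \<xi> U))"
  proof
    assume "has_cont_eps_selections (ell1 :: ('a \<Rightarrow> real) set) TYPE('x)"
    then show "\<forall>U :: 'a \<Rightarrow> 'x set. (\<forall>a. open (U a)) \<and> (\<Union>a. U a) = UNIV \<longrightarrow>
                   (\<exists>\<xi>. partition_of_unity \<xi> \<and> index_subordinated \<xi> U)"
      by (rule sel_imp_iii[OF c00_sub_ell1 subset_refl ell1_convex])
  next
    assume "\<forall>U :: 'a \<Rightarrow> 'x set. (\<forall>a. open (U a)) \<and> (\<Union>a. U a) = UNIV \<longrightarrow>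
                   (\<exists>\<xi>. partition_of_unity \<xi> \<and> index_subordinated \<xi> U)"
    then show "has_cont_eps_selections (ell1 :: ('a \<Rightarrow> real) set) TYPE('x)"
      by (rule iii_imp_sel[OF assms c00_sub_ell1 subset_refl])
  qed
  show ?thesis using c1 c2 by (simp only:)
qed

end
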